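(* Assume $M$ is projective in $\sigma[M]$ and let $X\in\sigma[M]$. (i) If $P\subsetneq X$ is an $M$-prime submodule of $X$, then $X/P$ is an $M$-prime module. (ii) For an $M$-ideal $P\subsetneq M$, the following are equivalent: (1) $P$ is a prime $M$-ideal; (2) $P$ is an $M$-prime submodule of $M$; (3) $M/P$ is an $M$-prime module.
   Context: $R$ is a ring with identity, modules are unital left $R$-modules, $M$ is a fixed left $R$-module. $\sigma[M]$ is the full subcategory of $R$-modules isomorphic to submodules of $M$-generated modules. $\mathrm{Ann}_M(X):=\bigcap_{f\in\mathrm{Hom}_R(M,X)}\ker f$. For $N\le M$ and a module $X$, $N\cdot X$ is the intersection of the kernels of all homomorphisms $X\to W$ where $W$ ranges over modules with $f(N)=0$ for all $f\in\mathrm{Hom}_R(M,W)$ (for $Y\le X$, $N\cdot Y$ is formed regarding $Y$ as a module). A submodule $N\le M$ is an $M$-ideal if $N$ is the intersection of the kernels of all homomorphisms from $M$ into modules of some class $\mathcal C$. A proper submodule $P$ of $X$ is $M$-prime if for all $N\le M$, $Y\le X$, $N\cdot Y\subseteq P$ implies $N\cdot X\subseteq P$ or $Y\subseteq P$; $X$ is an $M$-prime module if $X\ne0$ and $(0)$ is $M$-prime in $X$. A proper $M$-ideal $P$ is a prime $M$-ideal if $P=\mathrm{Ann}_M(X)$ for some $M$-prime module $X$. *)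

theory Defs
  imports Main
begin

text \<open>The ring R is the type 'r
  (any type of sort ring + monoid_mult, i.e. an associative ring with 1, possibly
  non-commutative and possibly the zero ring).  A module is a carrier set inside
  some type 'a with addition, zero and scalar multiplication.\<close>

record ('r, 'a) lmodule =
  mcar :: "'a set"
  madd :: "'a \<Rightarrow> 'a \<Rightarrow> 'a"
  mzero :: "'a"
  msmult :: "'r \<Rightarrow> 'a \<Rightarrow> 'a"

definition is_lmodule :: "('r::{ring,monoid_mult}, 'a) lmodule \<Rightarrow> bool" where
  "is_lmodule X \<longleftrightarrow>
     mzero X \<in> mcar X \<and>
     (\<forall>x\<in>mcar X. \<forall>y\<in>mcar X. madd X x y \<in> mcar X) \<and>
     (\<forall>r. \<forall>x\<in>mcar X. msmult X r x \<in> mcar X) \<and>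
     (\<forall>x\<in>mcar X. \<forall>y\<in>mcar X. \<forall>z\<in>mcar X. madd X (madd X x y) z = madd X x (madd X y z)) \<and>
     (\<forall>x\<in>mcar X. \<forall>y\<in>mcar X. madd X x y = madd X y x) \<and>
     (\<forall>x\<in>mcar X. madd X (mzero X) x = x) \<and>
     (\<forall>x\<in>mcar X. \<exists>y\<in>mcar X. madd X x y = mzero X) \<and>
     (\<forall>r. \<forall>x\<in>mcar X. \<forall>y\<in>mcar X. msmult X r (madd X x y) = madd X (msmult X r x) (msmult X r y)) \<and>
     (\<forall>r s. \<forall>x\<in>mcar X. msmult X (r + s) x = madd X (msmult X r x) (msmult X s x)) \<and>
     (\<forall>r s. \<forall>x\<in>mcar X. msmult X (r * s) x = msmult X r (msmult X s x)) \<and>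
     (\<forall>x\<in>mcar X. msmult X 1 x = x)"

definition submod :: "('r::{ring,monoid_mult}, 'a) lmodule \<Rightarrow> 'a set \<Rightarrow> bool" where
  "submod X N \<longleftrightarrow> N \<subseteq> mcar X \<and> mzero X \<in> N \<and>
     (\<forall>x\<in>N. \<forall>y\<in>N. madd X x y \<in> N) \<and> (\<forall>r. \<forall>x\<in>N. msmult X r x \<in> N)"

definition subm :: "('r, 'a) lmodule \<Rightarrow> 'a set \<Rightarrow> ('r, 'a) lmodule" where
  "subm X N = X\<lparr>mcar := N\<rparr>"

definition span :: "('r::{ring,monoid_mult}, 'a) lmodule \<Rightarrow> 'a set \<Rightarrow> 'a set" where
  "span X S = \<Inter>{N. submod X N \<and> S \<subseteq> N}"

definition hom :: "('r, 'a) lmodule \<Rightarrow> ('r, 'b) lmodule \<Rightarrow> ('a \<Rightarrow> 'b) \<Rightarrow> bool" where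
  "hom X Y f \<longleftrightarrow> (\<forall>x\<in>mcar X. f x \<in> mcar Y) \<and>
     (\<forall>x\<in>mcar X. \<forall>y\<in>mcar X. f (madd X x y) = madd Y (f x) (f y)) \<and>
     (\<forall>r. \<forall>x\<in>mcar X. f (msmult X r x) = msmult Y r (f x))"

definition coset :: "('r, 'a) lmodule \<Rightarrow> 'a set \<Rightarrow> 'a \<Rightarrow> 'a set" where
  "coset X P x = {madd X x p | p. p \<in> P}"

definition quot :: "('r, 'a) lmodule \<Rightarrow> 'a set \<Rightarrow> ('r, 'a set) lmodule" where
  "quot X P = \<lparr> mcar = coset X P ` mcar X,
                 madd = (\<lambda>A B. coset X P (madd X (SOME a. a \<in> A) (SOME b. b \<in> B))),
                 mzero = P,
                 msmult = (\<lambda>r A. coset X P (msmult X r (SOME a. a \<in> A))) \<rparr>"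

definition Ann :: "('r, 'm) lmodule \<Rightarrow> ('r, 'x) lmodule \<Rightarrow> 'm set" where
  "Ann M X = {m \<in> mcar M. \<forall>f. hom M X f \<longrightarrow> f m = mzero X}"

definition kills :: "('r, 'm) lmodule \<Rightarrow> 'm set \<Rightarrow> ('r, 'w) lmodule \<Rightarrow> bool" where
  "kills M N W \<longleftrightarrow> (\<forall>f. hom M W f \<longrightarrow> (\<forall>n\<in>N. f n = mzero W))"

text \<open>W ranges over modules whose carrier lies in the type of X; this is
  no restriction, since each kernel only depends on the image g(X), which has
  cardinality at most that of X and can be transported into that type.\<close>
definition mprod :: "('r::{ring,monoid_mult}, 'm) lmodule \<Rightarrow> 'm set \<Rightarrow> ('r, 'x) lmodule \<Rightarrow> 'x set" where
  "mprod M N X = {x \<in> mcar X. \<forall>(W :: ('r, 'x) lmodule) g.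
       is_lmodule W \<and> kills M N W \<and> hom X W g \<longrightarrow> g x = mzero W}"

text \<open>M-ideals: intersections of kernels of all homomorphisms from M into the modules
  of some class C (again, modules with carrier in the type of M suffice, since only
  the images f(M) matter).\<close>
definition Mideal :: "('r::{ring,monoid_mult}, 'm) lmodule \<Rightarrow> 'm set \<Rightarrow> bool" where
  "Mideal M N \<longleftrightarrow> (\<exists>C :: ('r, 'm) lmodule set. (\<forall>W\<in>C. is_lmodule W) \<and>
       N = {m \<in> mcar M. \<forall>W\<in>C. \<forall>f. hom M W f \<longrightarrow> f m = mzero W})"

definition Mprime_sub :: "('r::{ring,monoid_mult}, 'm) lmodule \<Rightarrow> ('r, 'x) lmodule \<Rightarrow> 'x set \<Rightarrow> bool" where
  "Mprime_sub M X P \<longleftrightarrow> submod X P \<and> P \<noteq> mcar X \<and>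
     (\<forall>N Y. submod M N \<longrightarrow> submod X Y \<longrightarrow> mprod M N (subm X Y) \<subseteq> P \<longrightarrow>
        mprod M N X \<subseteq> P \<or> Y \<subseteq> P)"

definition Mprime_module :: "('r::{ring,monoid_mult}, 'm) lmodule \<Rightarrow> ('r, 'x) lmodule \<Rightarrow> bool" where
  "Mprime_module M X \<longleftrightarrow> mcar X \<noteq> {mzero X} \<and> Mprime_sub M X {mzero X}"

text \<open>Prime M-ideal, witnessed by an M-prime module whose carrier lies in the type 'x.\<close>
definition prime_Mideal :: "'x itself \<Rightarrow> ('r::{ring,monoid_mult}, 'm) lmodule \<Rightarrow> 'm set \<Rightarrow> bool" where
  "prime_Mideal _ M P \<longleftrightarrow> Mideal M P \<and> P \<noteq> mcar M \<and>
     (\<exists>X :: ('r, 'x) lmodule. is_lmodule X \<and> Mprime_module M X \<and> P = Ann M X)"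

definition Mgenerated :: "('r::{ring,monoid_mult}, 'm) lmodule \<Rightarrow> ('r, 'y) lmodule \<Rightarrow> bool" where
  "Mgenerated M Y \<longleftrightarrow> mcar Y = span Y (\<Union>{f ` mcar M | f. hom M Y f})"

text \<open>X \<in> \<sigma>[M]: X embeds into an M-generated module.  The M-generated module can be
  chosen of cardinality at most |X|*|M|*aleph_0, so carriers in the type ('x * 'm) list
  suffice.\<close>
definition in_sigma :: "('r::{ring,monoid_mult}, 'm) lmodule \<Rightarrow> ('r, 'x) lmodule \<Rightarrow> bool" where
  "in_sigma M X \<longleftrightarrow> (\<exists>(Y :: ('r, ('x \<times> 'm) list) lmodule) h.
      is_lmodule Y \<and> Mgenerated M Y \<and> hom X Y h \<and> inj_on h (mcar X))"

text \<open>M projective in \<sigma>[M].  Modules with carrier in ('r * 'm) list suffice: any lifting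
  problem reduces to one between modules of cardinality at most |R|*|M|*aleph_0.\<close>
definition proj_sigma :: "('r::{ring,monoid_mult}, 'm) lmodule \<Rightarrow> bool" where
  "proj_sigma M \<longleftrightarrow> (\<forall>(A :: ('r, ('r \<times> 'm) list) lmodule) (B :: ('r, ('r \<times> 'm) list) lmodule) g f.
      is_lmodule A \<and> is_lmodule B \<and> in_sigma M A \<and> in_sigma M B \<and>
      hom A B g \<and> g ` mcar A = mcar B \<and> hom M B f \<longrightarrow>
      (\<exists>h. hom M A h \<and> (\<forall>m\<in>mcar M. g (h m) = f m)))"

end

theory Submission
  imports Defs
begin


definition msum :: "('r, 'a) lmodule \<Rightarrow> 'a list \<Rightarrow> 'a" where
  "msum X xs = foldr (madd X) xs (mzero X)"

lemma msum_Nil[simp]: "msum X [] = mzero X" by (simp add: msum_def)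
lemma msum_Cons[simp]: "msum X (x # xs) = madd X x (msum X xs)" by (simp add: msum_def)

context fixes X :: "('r::{ring,monoid_mult}, 'a) lmodule" assumes lm: "is_lmodule X"
begin
lemma lm_zero[simp,intro]: "mzero X \<in> mcar X" using lm by (simp add: is_lmodule_def)
lemma lm_add[simp,intro]: "x \<in> mcar X \<Longrightarrow> y \<in> mcar X \<Longrightarrow> madd X x y \<in> mcar X" using lm by (simp add: is_lmodule_def)
lemma lm_smult[simp,intro]: "x \<in> mcar X \<Longrightarrow> msmult X r x \<in> mcar X" using lm by (simp add: is_lmodule_def)
lemma lm_assoc: "x \<in> mcar X \<Longrightarrow> y \<in> mcar X \<Longrightarrow> z \<in> mcar X \<Longrightarrow> madd X (madd X x y) z = madd X x (madd X y z)" using lm unfolding is_lmodule_def by blast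
lemma lm_comm: "x \<in> mcar X \<Longrightarrow> y \<in> mcar X \<Longrightarrow> madd X x y = madd X y x" using lm unfolding is_lmodule_def by blast
lemma lm_lzero[simp]: "x \<in> mcar X \<Longrightarrow> madd X (mzero X) x = x" using lm unfolding is_lmodule_def by blast
lemma lm_rzero[simp]: "x \<in> mcar X \<Longrightarrow> madd X x (mzero X) = x" using lm_comm[of x "mzero X"] lm_lzero[of x] lm_zero by simp
lemma lm_inv: "x \<in> mcar X \<Longrightarrow> \<exists>y\<in>mcar X. madd X x y = mzero X" using lm unfolding is_lmodule_def by blast
lemma lm_sdist: "x \<in> mcar X \<Longrightarrow> y \<in> mcar X \<Longrightarrow> msmult X r (madd X x y) = madd X (msmult X r x) (msmult X r y)" using lm by (simp add: is_lmodule_def)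
lemma lm_adist: "x \<in> mcar X \<Longrightarrow> msmult X (r + s) x = madd X (msmult X r x) (msmult X s x)" using lm by (simp add: is_lmodule_def)
lemma lm_smassoc: "x \<in> mcar X \<Longrightarrow> msmult X (r * s) x = msmult X r (msmult X s x)" using lm by (simp add: is_lmodule_def)
lemma lm_one[simp]: "x \<in> mcar X \<Longrightarrow> msmult X 1 x = x" using lm by (simp add: is_lmodule_def)

lemma lm_cancel: assumes "x \<in> mcar X" "y \<in> mcar X" "z \<in> mcar X" "madd X x y = madd X x z" shows "y = z"
proof -
  obtain u where u: "u \<in> mcar X" "madd X x u = mzero X" using lm_inv assms(1) by blast
  have "madd X (madd X u x) y = madd X (madd X u x) z" using assms u by (simp add: lm_assoc)
  moreover have "madd X u x = mzero X" using u assms lm_comm by metis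
  ultimately show ?thesis using assms by simp
qed

lemma lm_idem: "a \<in> mcar X \<Longrightarrow> madd X a a = a \<Longrightarrow> a = mzero X"
  using lm_cancel[of a a "mzero X"] by simp

lemma lm_0smult[simp]: assumes "x \<in> mcar X" shows "msmult X 0 x = mzero X"
proof -
  have "msmult X (0+0) x = madd X (msmult X 0 x) (msmult X 0 x)" using lm_adist assms by blast
  thus ?thesis using lm_idem assms by simp
qed

lemma lm_smult0[simp]: "msmult X r (mzero X) = mzero X"
proof -
  have "msmult X r (madd X (mzero X) (mzero X)) = madd X (msmult X r (mzero X)) (msmult X r (mzero X))" using lm_sdist by blast
  thus ?thesis using lm_idem by simp
qed

lemma lm_neg: assumes "x \<in> mcar X" shows "madd X x (msmult X (-1) x) = mzero X"
proof -
  have "msmult X (1 + -1) x = madd X (msmult X 1 x) (msmult X (-1) x)" using lm_adist assms by blast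
  thus ?thesis using assms by simp
qed

lemma msum_in[intro]: "set xs \<subseteq> mcar X \<Longrightarrow> msum X xs \<in> mcar X" by (induction xs) auto

lemma msum_append: "set xs \<subseteq> mcar X \<Longrightarrow> set ys \<subseteq> mcar X \<Longrightarrow> msum X (xs @ ys) = madd X (msum X xs) (msum X ys)"
  by (induction xs) (auto simp: lm_assoc msum_in)

lemma msum_smult: "set xs \<subseteq> mcar X \<Longrightarrow> msmult X r (msum X xs) = msum X (map (msmult X r) xs)"
  by (induction xs) (auto simp: lm_sdist msum_in)
end

lemma submodD: "submod X N \<Longrightarrow> N \<subseteq> mcar X" "submod X N \<Longrightarrow> mzero X \<in> N"
  "submod X N \<Longrightarrow> x \<in> N \<Longrightarrow> y \<in> N \<Longrightarrow> madd X x y \<in> N" "submod X N \<Longrightarrow> x \<in> N \<Longrightarrow> msmult X r x \<in> N"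
  by (auto simp: submod_def)

lemma msum_submod: "submod X N \<Longrightarrow> set xs \<subseteq> N \<Longrightarrow> msum X xs \<in> N"
  by (induction xs) (auto simp: submod_def)

lemma subm_simps[simp]: "mcar (subm X N) = N" "madd (subm X N) = madd X" "mzero (subm X N) = mzero X"
  "msmult (subm X N) = msmult X" by (auto simp: subm_def)

lemma msum_subm[simp]: "msum (subm X N) xs = msum X xs" by (simp add: msum_def)

lemma submod_lm: assumes lm: "is_lmodule X" and s: "submod X N" shows "is_lmodule (subm X N)"
proof -
  have N: "N \<subseteq> mcar X" using s by (simp add: submod_def)
  have inv: "\<forall>x\<in>N. \<exists>y\<in>N. madd X x y = mzero X"
  proof
    fix x assume x: "x \<in> N"
    have "msmult X (-1) x \<in> N" using submodD(4)[OF s x] .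
    moreover have "madd X x (msmult X (-1) x) = mzero X" using lm_neg[OF lm] x N by blast
    ultimately show "\<exists>y\<in>N. madd X x y = mzero X" by blast
  qed
  have c: "\<And>x. x \<in> N \<Longrightarrow> x \<in> mcar X" using N by blast
  show ?thesis unfolding is_lmodule_def subm_simps
  proof (intro conjI ballI allI)
    fix x y z r s assume "x \<in> N" "y \<in> N" "z \<in> N"
    then show "madd X (madd X x y) z = madd X x (madd X y z)" using c lm_assoc[OF lm] by blast
  next
    fix x y assume "x \<in> N" "y \<in> N"
    then show "madd X x y = madd X y x" using c lm_comm[OF lm] by blast
  next
    fix x r s assume "x \<in> N"
    then show "madd X (mzero X) x = x" "msmult X (r + s) x = madd X (msmult X r x) (msmult X s x)"
      "msmult X (r * s) x = msmult X r (msmult X s x)" "msmult X 1 x = x"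
      using c lm_lzero[OF lm] lm_adist[OF lm] lm_smassoc[OF lm] lm_one[OF lm] by blast+
  next
    fix x y r assume "x \<in> N" "y \<in> N"
    then show "msmult X r (madd X x y) = madd X (msmult X r x) (msmult X r y)" using c lm_sdist[OF lm] by blast
  qed (use submodD[OF s] inv in blast)+
qed

lemma submod_full: "is_lmodule X \<Longrightarrow> submod X (mcar X)" by (auto simp: submod_def)

lemma homD: "hom X Y f \<Longrightarrow> x \<in> mcar X \<Longrightarrow> f x \<in> mcar Y"
  "hom X Y f \<Longrightarrow> x \<in> mcar X \<Longrightarrow> y \<in> mcar X \<Longrightarrow> f (madd X x y) = madd Y (f x) (f y)"
  "hom X Y f \<Longrightarrow> x \<in> mcar X \<Longrightarrow> f (msmult X r x) = msmult Y r (f x)"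
  by (auto simp: hom_def)

lemma hom_comp: "hom X Y f \<Longrightarrow> hom Y Z g \<Longrightarrow> hom X Z (g \<circ> f)"
  by (auto simp: hom_def)

lemma hom_zero: assumes "is_lmodule X" "is_lmodule Y" "hom X Y f" shows "f (mzero X) = mzero Y"
proof -
  have "f (madd X (mzero X) (mzero X)) = madd Y (f (mzero X)) (f (mzero X))" using assms homD by (metis lm_zero)
  thus ?thesis using assms lm_idem homD lm_zero lm_lzero by metis
qed

lemma hom_msum: assumes "hom X Y f" "is_lmodule X" "is_lmodule Y" shows "set xs \<subseteq> mcar X \<Longrightarrow> f (msum X xs) = msum Y (map f xs)"
proof (induction xs)
  case Nil then show ?case using hom_zero[OF assms(2,3,1)] by simp
next
  case (Cons a xs)
  then have "a \<in> mcar X" "msum X xs \<in> mcar X" using msum_in[OF assms(2)] by auto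
  then show ?case using Cons homD(2)[OF assms(1)] by simp
qed

lemma hom_subm_iff: "N \<subseteq> mcar X \<Longrightarrow> hom A (subm X N) f \<longleftrightarrow> hom A X f \<and> (\<forall>x\<in>mcar A. f x \<in> N)"
  unfolding hom_def subm_simps by blast

lemma hom_from_subm: "hom X Y f \<Longrightarrow> N \<subseteq> mcar X \<Longrightarrow> hom (subm X N) Y f"
  unfolding hom_def subm_simps by blast

lemma hom_cong: assumes "is_lmodule X" "hom X Y f" "\<And>x. x \<in> mcar X \<Longrightarrow> f x = g x" shows "hom X Y g"
  using assms(2,3) lm_add[OF assms(1)] lm_smult[OF assms(1)] unfolding hom_def by simp

lemma hom_id: "hom X X id" by (auto simp: hom_def)

lemma hom_image_submod: assumes "is_lmodule X" "is_lmodule Y" "hom X Y f" "submod X S" shows "submod Y (f ` S)"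
proof -
  have S: "S \<subseteq> mcar X" using assms(4) submodD by blast
  show ?thesis unfolding submod_def
  proof (intro conjI ballI allI)
    show "f ` S \<subseteq> mcar Y" using S homD(1)[OF assms(3)] by blast
    show "mzero Y \<in> f ` S" using hom_zero[OF assms(1-3)] submodD(2)[OF assms(4)] by force
    fix x y assume "x \<in> f ` S" "y \<in> f ` S"
    then obtain a b where ab: "a \<in> S" "b \<in> S" "x = f a" "y = f b" by blast
    moreover have "a \<in> mcar X" "b \<in> mcar X" using ab S by auto
    ultimately have "madd Y x y = f (madd X a b)" using homD(2)[OF assms(3)] by simp
    then show "madd Y x y \<in> f ` S" using ab submodD(3)[OF assms(4)] by simp
  next
    fix r x assume "x \<in> f ` S"
    then obtain a where a: "a \<in> S" "x = f a" by blast
    moreover have "a \<in> mcar X" using a S by auto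
    ultimately have "msmult Y r x = f (msmult X r a)" using homD(3)[OF assms(3)] by simp
    then show "msmult Y r x \<in> f ` S" using a submodD(4)[OF assms(4)] by simp
  qed
qed

lemma hom_preimage_submod: assumes "is_lmodule X" "is_lmodule Y" "hom X Y f" "submod Y T"
  shows "submod X {x \<in> mcar X. f x \<in> T}"
  unfolding submod_def
proof (intro conjI ballI allI)
  show "mzero X \<in> {x \<in> mcar X. f x \<in> T}" using hom_zero[OF assms(1-3)] submodD(2)[OF assms(4)] lm_zero[OF assms(1)] by simp
  fix x y assume "x \<in> {x \<in> mcar X. f x \<in> T}" "y \<in> {x \<in> mcar X. f x \<in> T}"
  then show "madd X x y \<in> {x \<in> mcar X. f x \<in> T}" using homD(2)[OF assms(3)] submodD(3)[OF assms(4)] assms(1) by simp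
next
  fix r x assume "x \<in> {x \<in> mcar X. f x \<in> T}"
  then show "msmult X r x \<in> {x \<in> mcar X. f x \<in> T}" using homD(3)[OF assms(3)] submodD(4)[OF assms(4)] assms(1) by simp
qed auto

lemma submod_inter: "submod X A \<Longrightarrow> submod X B \<Longrightarrow> submod X (A \<inter> B)"
  by (auto simp: submod_def)

lemma lm_image: assumes lm: "is_lmodule X" and h: "hom X Q p" and s: "p ` mcar X = mcar Q"
  and z: "mzero Q = p (mzero X)" shows "is_lmodule Q"
proof -
  have ex: "\<And>a. a \<in> mcar Q \<Longrightarrow> \<exists>x\<in>mcar X. a = p x" using s by blast
  have add: "\<And>a b. a \<in> mcar X \<Longrightarrow> b \<in> mcar X \<Longrightarrow> madd Q (p a) (p b) = p (madd X a b)"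
    using homD(2)[OF h] by simp
  have sm: "\<And>a r. a \<in> mcar X \<Longrightarrow> msmult Q r (p a) = p (msmult X r a)"
    using homD(3)[OF h] by simp
  have inQ: "\<And>a. a \<in> mcar X \<Longrightarrow> p a \<in> mcar Q" using homD(1)[OF h] by simp
  show ?thesis unfolding is_lmodule_def
  proof (intro conjI ballI allI)
    show "mzero Q \<in> mcar Q" using z inQ lm by simp
    fix x y assume "x \<in> mcar Q" "y \<in> mcar Q"
    then obtain a b where ab: "a \<in> mcar X" "b \<in> mcar X" "x = p a" "y = p b" using ex by blast
    show "madd Q x y \<in> mcar Q" using ab by (simp add: add inQ lm)
    show "madd Q x y = madd Q y x" using ab by (simp add: add lm_comm[OF lm])
    fix r show "msmult Q r (madd Q x y) = madd Q (msmult Q r x) (msmult Q r y)"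
      using ab by (simp add: add sm lm lm_sdist[OF lm])
  next
    fix x y z assume "x \<in> mcar Q" "y \<in> mcar Q" "z \<in> mcar Q"
    then obtain a b c where abc: "a \<in> mcar X" "x = p a" "b \<in> mcar X" "y = p b" "c \<in> mcar X" "z = p c" using ex by meson
    then show "madd Q (madd Q x y) z = madd Q x (madd Q y z)" by (simp add: add lm lm_assoc[OF lm])
  next
    fix x assume "x \<in> mcar Q"
    then obtain a where a: "a \<in> mcar X" "x = p a" using ex by blast
    show "madd Q (mzero Q) x = x" using a z by (simp add: add lm)
    obtain b where b: "b \<in> mcar X" "madd X a b = mzero X" using lm_inv[OF lm a(1)] by blast
    have "madd Q x (p b) = mzero Q" using a b z by (simp add: add)
    then show "\<exists>y\<in>mcar Q. madd Q x y = mzero Q" using b inQ by blast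
    fix r show "msmult Q r x \<in> mcar Q" using a by (simp add: sm inQ lm)
    fix s show "msmult Q (r + s) x = madd Q (msmult Q r x) (msmult Q s x)" using a by (simp add: sm add lm lm_adist[OF lm])
    show "msmult Q (r * s) x = msmult Q r (msmult Q s x)" using a by (simp add: sm lm lm_smassoc[OF lm])
  next
    fix x assume "x \<in> mcar Q"
    then obtain a where a: "a \<in> mcar X" "x = p a" using ex by blast
    show "msmult Q 1 x = x" using a by (simp add: sm lm)
  qed
qed



lemma lm_swap: assumes lm: "is_lmodule X" and "x \<in> mcar X" "p \<in> mcar X" "y \<in> mcar X" "q \<in> mcar X"
  shows "madd X (madd X x p) (madd X y q) = madd X (madd X x y) (madd X p q)"
proof -
  have "madd X (madd X x p) (madd X y q) = madd X x (madd X p (madd X y q))" using assms using lm_assoc[OF lm] by simp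
  also have "madd X p (madd X y q) = madd X (madd X p y) q" using assms using lm_assoc[OF lm] by simp
  also have "madd X p y = madd X y p" using assms lm_comm[OF lm, of p y] by simp
  also have "madd X (madd X y p) q = madd X y (madd X p q)" using assms using lm_assoc[OF lm] by simp
  also have "madd X x (madd X y (madd X p q)) = madd X (madd X x y) (madd X p q)" using assms using lm_assoc[OF lm] by simp
  finally show ?thesis .
qed

context fixes X :: "('r::{ring,monoid_mult}, 'a) lmodule" and P assumes lm: "is_lmodule X" and sP: "submod X P"
begin

lemma P_sub: "P \<subseteq> mcar X" using sP submodD by blast
lemma P_in: "p \<in> P \<Longrightarrow> p \<in> mcar X" using P_sub by blast

lemma coset_self: "x \<in> mcar X \<Longrightarrow> x \<in> coset X P x"
  unfolding coset_def using submodD(2)[OF sP] lm by force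

lemma coset_sub: "x \<in> mcar X \<Longrightarrow> coset X P x \<subseteq> mcar X"
  unfolding coset_def using P_in lm by auto

lemma coset_eq: assumes x: "x \<in> mcar X" and y: "y \<in> coset X P x" shows "coset X P y = coset X P x"
proof -
  obtain p where p: "p \<in> P" "y = madd X x p" using y unfolding coset_def by blast
  have pX: "p \<in> mcar X" using P_in p by blast
  show ?thesis
  proof
    show "coset X P y \<subseteq> coset X P x"
    proof
      fix z assume "z \<in> coset X P y"
      then obtain q where q: "q \<in> P" "z = madd X y q" unfolding coset_def by blast
      then have "z = madd X x (madd X p q)" using p pX P_in x lm using lm_assoc[OF lm] by simp
      moreover have "madd X p q \<in> P" using submodD(3)[OF sP] p q by blast
      ultimately show "z \<in> coset X P x" unfolding coset_def by blast
    qed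
  next
    show "coset X P x \<subseteq> coset X P y"
    proof
      fix z assume "z \<in> coset X P x"
      then obtain q where q: "q \<in> P" "z = madd X x q" unfolding coset_def by blast
      have qX: "q \<in> mcar X" using P_in q by blast
      let ?n = "msmult X (-1) p"
      have nP: "?n \<in> P" using submodD(4)[OF sP] p by blast
      have nX: "?n \<in> mcar X" using P_in nP by blast
      have "madd X y (madd X ?n q) = madd X x (madd X p (madd X ?n q))" using p pX nX qX x lm using lm_assoc[OF lm] by simp
      also have "madd X p (madd X ?n q) = madd X (madd X p ?n) q" using pX nX qX lm using lm_assoc[OF lm] by simp
      also have "madd X p ?n = mzero X" using lm_neg[OF lm pX] .
      finally have "z = madd X y (madd X ?n q)" using q qX lm by simp
      moreover have "madd X ?n q \<in> P" using submodD(3)[OF sP] nP q by blast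
      ultimately show "z \<in> coset X P y" unfolding coset_def by blast
    qed
  qed
qed

lemma coset_zero0: "coset X P (mzero X) = P"
proof -
  have "\<And>p. p \<in> P \<Longrightarrow> madd X (mzero X) p = p" using P_in lm_lzero[OF lm] by blast
  then show ?thesis unfolding coset_def by force
qed

lemma coset_zero: assumes x: "x \<in> mcar X" shows "coset X P x = P \<longleftrightarrow> x \<in> P"
proof
  assume "coset X P x = P" then show "x \<in> P" using coset_self[OF x] by blast
next
  assume "x \<in> P"
  then have "x \<in> coset X P (mzero X)" using coset_zero0 by simp
  then show "coset X P x = P" using coset_eq[of "mzero X" x] coset_zero0 lm by simp
qed

lemma coset_add: assumes "x \<in> mcar X" "y \<in> mcar X" "a \<in> coset X P x" "b \<in> coset X P y"
  shows "madd X a b \<in> coset X P (madd X x y)"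
proof -
  obtain p q where "p \<in> P" "a = madd X x p" "q \<in> P" "b = madd X y q" using assms unfolding coset_def by blast
  moreover then have "madd X a b = madd X (madd X x y) (madd X p q)" using lm_swap[OF lm] assms P_in by simp
  ultimately show ?thesis unfolding coset_def using submodD(3)[OF sP] by blast
qed

lemma coset_smult: assumes "x \<in> mcar X" "a \<in> coset X P x"
  shows "msmult X r a \<in> coset X P (msmult X r x)"
proof -
  obtain p where "p \<in> P" "a = madd X x p" using assms unfolding coset_def by blast
  moreover then have "msmult X r a = madd X (msmult X r x) (msmult X r p)" using lm_sdist[OF lm] assms P_in by simp
  ultimately show ?thesis unfolding coset_def using submodD(4)[OF sP] by blast
qed

lemma some_coset: "x \<in> mcar X \<Longrightarrow> (SOME a. a \<in> coset X P x) \<in> coset X P x"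
  using coset_self by (meson someI_ex)

lemma quot_hom: "hom X (quot X P) (coset X P)"
  unfolding hom_def
proof (intro conjI ballI allI)
  fix x assume x: "x \<in> mcar X"
  show "coset X P x \<in> mcar (quot X P)" using x by (simp add: quot_def)
  fix y assume y: "y \<in> mcar X"
  have "madd X (SOME a. a \<in> coset X P x) (SOME b. b \<in> coset X P y) \<in> coset X P (madd X x y)"
    using coset_add x y some_coset by blast
  then show "coset X P (madd X x y) = madd (quot X P) (coset X P x) (coset X P y)"
    using coset_eq[of "madd X x y"] x y lm by (simp add: quot_def)
next
  fix x r assume x: "x \<in> mcar X"
  have "msmult X r (SOME a. a \<in> coset X P x) \<in> coset X P (msmult X r x)"
    using coset_smult x some_coset by blast
  then show "coset X P (msmult X r x) = msmult (quot X P) r (coset X P x)"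
    using coset_eq[of "msmult X r x"] x lm by (simp add: quot_def)
qed

lemma quot_car: "mcar (quot X P) = coset X P ` mcar X" by (simp add: quot_def)
lemma quot_zero: "mzero (quot X P) = P" by (simp add: quot_def)

lemma quot_lm: "is_lmodule (quot X P)"
  by (rule lm_image[OF lm quot_hom]) (simp_all only: quot_car quot_zero coset_zero0)

lemma quot_ne: "P \<noteq> mcar X \<Longrightarrow> mcar (quot X P) \<noteq> {P}"
proof
  assume "P \<noteq> mcar X" "mcar (quot X P) = {P}"
  then obtain x where "x \<in> mcar X" "x \<notin> P" using P_sub by blast
  moreover then have "coset X P x = P" using \<open>mcar (quot X P) = {P}\<close> quot_car by blast
  ultimately show False using coset_zero by blast
qed

lemma quot_rep_inj: "inj_on (\<lambda>c. SOME a. a \<in> c) (mcar (quot X P))"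
proof (rule inj_onI)
  fix c d assume "c \<in> mcar (quot X P)" "d \<in> mcar (quot X P)" and e: "(SOME a. a \<in> c) = (SOME a. a \<in> d)"
  then obtain x y where xy: "x \<in> mcar X" "y \<in> mcar X" "c = coset X P x" "d = coset X P y" using quot_car by auto
  have c1: "(SOME a. a \<in> c) \<in> coset X P x" using some_coset xy by simp
  have d1: "(SOME a. a \<in> d) \<in> coset X P y" using some_coset xy by simp
  have "coset X P (SOME a. a \<in> c) = c" "coset X P (SOME a. a \<in> d) = d"
    using coset_eq[OF xy(1) c1] coset_eq[OF xy(2) d1] xy by simp_all
  then show "c = d" using e by metis
qed

end

definition trans :: "('r, 'a) lmodule \<Rightarrow> ('a \<Rightarrow> 'b) \<Rightarrow> ('r, 'b) lmodule" where
  "trans Z \<phi> = \<lparr>mcar = \<phi> ` mcar Z,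
     madd = (\<lambda>a b. \<phi> (madd Z (the_inv_into (mcar Z) \<phi> a) (the_inv_into (mcar Z) \<phi> b))),
     mzero = \<phi> (mzero Z),
     msmult = (\<lambda>r a. \<phi> (msmult Z r (the_inv_into (mcar Z) \<phi> a)))\<rparr>"

lemma trans_simps: "mcar (trans Z \<phi>) = \<phi> ` mcar Z" "mzero (trans Z \<phi>) = \<phi> (mzero Z)"
  "madd (trans Z \<phi>) a b = \<phi> (madd Z (the_inv_into (mcar Z) \<phi> a) (the_inv_into (mcar Z) \<phi> b))"
  "msmult (trans Z \<phi>) r a = \<phi> (msmult Z r (the_inv_into (mcar Z) \<phi> a))"
  by (simp_all add: trans_def)

context fixes Z :: "('r::{ring,monoid_mult}, 'a) lmodule" and \<phi> :: "'a \<Rightarrow> 'b"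
  assumes lm: "is_lmodule Z" and inj: "inj_on \<phi> (mcar Z)"
begin

lemma trans_hom: "hom Z (trans Z \<phi>) \<phi>"
  unfolding hom_def trans_simps using the_inv_into_f_f[OF inj] by simp

lemma trans_lm: "is_lmodule (trans Z \<phi>)"
  by (rule lm_image[OF lm trans_hom]) (simp_all only: trans_simps)

lemma trans_inv_hom: "hom (trans Z \<phi>) Z (the_inv_into (mcar Z) \<phi>)"
  unfolding hom_def trans_simps
proof (intro conjI ballI allI)
  fix x assume "x \<in> \<phi> ` mcar Z"
  then show "the_inv_into (mcar Z) \<phi> x \<in> mcar Z" using the_inv_into_into[OF inj] by blast
next
  fix x y assume "x \<in> \<phi> ` mcar Z" "y \<in> \<phi> ` mcar Z"
  then have "the_inv_into (mcar Z) \<phi> x \<in> mcar Z" "the_inv_into (mcar Z) \<phi> y \<in> mcar Z"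
    using the_inv_into_into[OF inj] by blast+
  then show "the_inv_into (mcar Z) \<phi> (\<phi> (madd Z (the_inv_into (mcar Z) \<phi> x) (the_inv_into (mcar Z) \<phi> y))) =
         madd Z (the_inv_into (mcar Z) \<phi> x) (the_inv_into (mcar Z) \<phi> y)"
    using the_inv_into_f_f[OF inj] lm_add[OF lm] by simp
next
  fix x r assume "x \<in> \<phi> ` mcar Z"
  then have "the_inv_into (mcar Z) \<phi> x \<in> mcar Z" using the_inv_into_into[OF inj] by blast
  then show "the_inv_into (mcar Z) \<phi> (\<phi> (msmult Z r (the_inv_into (mcar Z) \<phi> x))) = msmult Z r (the_inv_into (mcar Z) \<phi> x)"
    using the_inv_into_f_f[OF inj] lm_smult[OF lm] by simp
qed

lemma trans_inv_inj: "inj_on (the_inv_into (mcar Z) \<phi>) (mcar (trans Z \<phi>))"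
  unfolding trans_simps using inj inj_on_the_inv_into by blast

end

lemma mprod_sub: "mprod M N X \<subseteq> mcar X" by (auto simp: mprod_def)

lemma mprod_fun: assumes "hom M X k" "n \<in> mcar M" "n \<in> N" shows "k n \<in> mprod M N X"
  unfolding mprod_def
proof (safe)
  show "k n \<in> mcar X" using homD(1)[OF assms(1,2)] .
  fix W :: "('a, 'c) lmodule" and g assume "kills M N W" "hom X W g"
  then have "hom M W (g \<circ> k)" using hom_comp assms(1) by blast
  then show "g (k n) = mzero W" using \<open>kills M N W\<close> assms unfolding kills_def by fastforce
qed

lemma kills_of_mprod: assumes "mprod M N X \<subseteq> {mzero X}" "N \<subseteq> mcar M" shows "kills M N X"
  unfolding kills_def
proof (intro allI impI ballI)
  fix f n assume f: "hom M X f" and n: "n \<in> N"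
  then have "n \<in> mcar M" using assms(2) by blast
  then have "f n \<in> mprod M N X" using mprod_fun[OF f _ n] by blast
  then show "f n = mzero X" using assms(1) by blast
qed

lemma mprod_of_kills: assumes "kills M N X" "is_lmodule X" shows "mprod M N X \<subseteq> {mzero X}"
  unfolding mprod_def using assms hom_id[of X] by fastforce

lemma kills_iso: assumes "kills M N Z" "hom T Z \<psi>" "inj_on \<psi> (mcar T)" "is_lmodule T" "is_lmodule Z"
  and NM: "N \<subseteq> mcar M"
  shows "kills M N T"
  unfolding kills_def
proof (intro allI impI ballI)
  fix f n assume f: "hom M T f" and n: "n \<in> N"
  have "hom M Z (\<psi> \<circ> f)" using hom_comp f assms(2) by blast
  then have "\<psi> (f n) = \<psi> (mzero T)" using assms(1) n hom_zero[OF assms(4,5,2)] unfolding kills_def by simp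
  moreover have "f n \<in> mcar T" using homD(1)[OF f] n NM by blast
  ultimately show "f n = mzero T" using assms(3) inj_onD lm_zero[OF assms(4)] by metis
qed

lemma kills_subm: assumes "kills M N X" "S \<subseteq> mcar X" shows "kills M N (subm X S)"
  using assms unfolding kills_def by (simp add: hom_subm_iff)



lemma span_sub: assumes "is_lmodule Y" "S \<subseteq> mcar Y" shows "span Y S \<subseteq> mcar Y"
  unfolding span_def using submod_full[OF assms(1)] assms(2) by blast

lemma span_msum: assumes "set xs \<subseteq> S" shows "msum Y xs \<in> span Y S"
  unfolding span_def using msum_submod assms by blast

lemma Mgen_intro:
  assumes lm: "is_lmodule Y"
    and rep: "\<And>y. y \<in> mcar Y \<Longrightarrow> \<exists>xs. set xs \<subseteq> \<Union>{f ` mcar M | f. hom M Y f} \<and> y = msum Y xs"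
  shows "Mgenerated M Y"
  unfolding Mgenerated_def
proof
  show "mcar Y \<subseteq> span Y (\<Union>{f ` mcar M | f. hom M Y f})"
    using rep span_msum by blast
  have "\<Union>{f ` mcar M | f. hom M Y f} \<subseteq> mcar Y"
  proof
    fix z assume "z \<in> \<Union>{f ` mcar M | f. hom M Y f}"
    then obtain f x where fx: "hom M Y f" "x \<in> mcar M" "z = f x" by blast
    then show "z \<in> mcar Y" using homD(1)[OF fx(1,2)] by simp
  qed
  then show "span Y (\<Union>{f ` mcar M | f. hom M Y f}) \<subseteq> mcar Y" using span_sub[OF lm] by blast
qed

lemma Mgen_rep:
  assumes lmM: "is_lmodule M" and lm: "is_lmodule Y" and g: "Mgenerated M Y" and y: "y \<in> mcar Y"
  shows "\<exists>ps. (\<forall>p\<in>set ps. hom M Y (fst p) \<and> snd p \<in> mcar M) \<and> y = msum Y (map (\<lambda>p. fst p (snd p)) ps)"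
proof -
  define Sums where "Sums = {y. \<exists>ps. (\<forall>p\<in>set ps. hom M Y (fst p) \<and> snd p \<in> mcar M) \<and> y = msum Y (map (\<lambda>p. fst p (snd p)) ps)}"
  have inY: "set (map (\<lambda>p. fst p (snd p)) ps) \<subseteq> mcar Y" if "\<forall>p\<in>set ps. hom M Y (fst p) \<and> snd p \<in> mcar M" for ps
  proof
    fix z assume "z \<in> set (map (\<lambda>p. fst p (snd p)) ps)"
    then obtain p where p: "p \<in> set ps" "z = fst p (snd p)" by auto
    then have "hom M Y (fst p)" "snd p \<in> mcar M" using that by auto
    then show "z \<in> mcar Y" using homD(1)[of M Y "fst p" "snd p"] p(2) by simp
  qed
  have "submod Y Sums" unfolding submod_def
  proof (intro conjI ballI allI)
    show "Sums \<subseteq> mcar Y" unfolding Sums_def using inY msum_in[OF lm] by blast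
    show "mzero Y \<in> Sums" unfolding Sums_def by (rule CollectI, rule exI[of _ "[]"]) simp
  next
    fix a b assume "a \<in> Sums" "b \<in> Sums"
    then obtain ps qs where ps: "\<forall>p\<in>set ps. hom M Y (fst p) \<and> snd p \<in> mcar M" "a = msum Y (map (\<lambda>p. fst p (snd p)) ps)"
      and qs: "\<forall>p\<in>set qs. hom M Y (fst p) \<and> snd p \<in> mcar M" "b = msum Y (map (\<lambda>p. fst p (snd p)) qs)"
      unfolding Sums_def by blast
    have "madd Y a b = msum Y (map (\<lambda>p. fst p (snd p)) (ps @ qs))"
      using msum_append[OF lm inY[OF ps(1)] inY[OF qs(1)]] ps qs by simp
    moreover have "\<forall>p\<in>set (ps @ qs). hom M Y (fst p) \<and> snd p \<in> mcar M" using ps qs by auto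
    ultimately show "madd Y a b \<in> Sums" unfolding Sums_def by blast
  next
    fix r a assume "a \<in> Sums"
    then obtain ps where ps: "\<forall>p\<in>set ps. hom M Y (fst p) \<and> snd p \<in> mcar M" "a = msum Y (map (\<lambda>p. fst p (snd p)) ps)"
      unfolding Sums_def by blast
    define qs where "qs = map (\<lambda>p. (fst p, msmult M r (snd p))) ps"
    have "msmult Y r a = msum Y (map (msmult Y r) (map (\<lambda>p. fst p (snd p)) ps))"
      using msum_smult[OF lm inY[OF ps(1)]] ps by simp
    also have "map (msmult Y r) (map (\<lambda>p. fst p (snd p)) ps) = map (\<lambda>p. fst p (snd p)) qs"
      unfolding qs_def using ps(1) homD(3)[of M Y "fst _" "snd _" r] by (auto simp: split_beta)
    finally have "msmult Y r a = msum Y (map (\<lambda>p. fst p (snd p)) qs)" .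
    moreover have "\<forall>p\<in>set qs. hom M Y (fst p) \<and> snd p \<in> mcar M" unfolding qs_def using ps(1) lm_smult[OF lmM] by auto
    ultimately show "msmult Y r a \<in> Sums" unfolding Sums_def by blast
  qed
  moreover have "\<Union>{f ` mcar M | f. hom M Y f} \<subseteq> Sums"
  proof
    fix z assume "z \<in> \<Union>{f ` mcar M | f. hom M Y f}"
    then obtain f x where fx: "hom M Y f" "x \<in> mcar M" "z = f x" by blast
    then have "z = msum Y (map (\<lambda>p. fst p (snd p)) [(f, x)])" using lm_rzero[OF lm homD(1)[OF fx(1,2)]] by simp
    then show "z \<in> Sums" unfolding Sums_def using fx(1,2) by (intro CollectI exI[of _ "[(f, x)]"] conjI) auto
  qed
  ultimately have "span Y (\<Union>{f ` mcar M | f. hom M Y f}) \<subseteq> Sums" unfolding span_def by blast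
  then have "y \<in> Sums" using g y unfolding Mgenerated_def by blast
  then show ?thesis unfolding Sums_def by blast
qed

lemma in_sigma_subm: assumes "in_sigma M A" "submod A Z" shows "in_sigma M (subm A Z)"
proof -
  have Z: "Z \<subseteq> mcar A" using assms(2) submodD by blast
  show ?thesis
    using assms(1) unfolding in_sigma_def
    apply (elim exE conjE)
    apply (rule exI, rule exI, intro conjI)
       apply assumption+
     apply (rule hom_from_subm, assumption, rule Z)
    apply (erule inj_on_subset)
    using Z by simp
qed

lemma in_sigma_surj:
  fixes M :: "('r::{ring,monoid_mult}, 'm) lmodule" and Z :: "('r, 'z) lmodule"
  assumes lm: "is_lmodule Z" and f: "hom M Z f" and s: "f ` mcar M = mcar Z"
  shows "in_sigma M Z"
proof -
  define enc :: "'z \<Rightarrow> ('z \<times> 'm) list" where "enc z = [(z, undefined)]" for z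
  have inj: "inj_on enc (mcar Z)" unfolding enc_def by (rule inj_onI) simp
  define Y where "Y = trans Z enc"
  have lmY: "is_lmodule Y" unfolding Y_def using trans_lm[OF lm inj] .
  have hY: "hom Z Y enc" unfolding Y_def using trans_hom[OF lm inj] .
  have "Mgenerated M Y"
  proof (rule Mgen_intro[OF lmY])
    fix y assume "y \<in> mcar Y"
    then obtain z where z: "z \<in> mcar Z" "y = enc z" unfolding Y_def trans_simps by auto
    then obtain m where m: "m \<in> mcar M" "y = enc (f m)" using s by (metis imageE)
    have "hom M Y (enc \<circ> f)" using hom_comp[OF f hY] .
    moreover have "y \<in> (enc \<circ> f) ` mcar M" using m by simp
    ultimately have "y \<in> \<Union>{g ` mcar M | g. hom M Y g}" by blast
    moreover have "y = msum Y [y]" using lm_rzero[OF lmY \<open>y \<in> mcar Y\<close>] by simp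
    ultimately show "\<exists>xs. set xs \<subseteq> \<Union>{f ` mcar M | f. hom M Y f} \<and> y = msum Y xs"
      by (intro exI[of _ "[y]"]) simp
  qed
  then show ?thesis unfolding in_sigma_def using lmY hY inj by blast
qed

lemma Mideal_submod: assumes lm: "is_lmodule M" and I: "Mideal M P" shows "submod M P"
proof -
  obtain C :: "('a, 'b) lmodule set" where C: "\<forall>W\<in>C. is_lmodule W"
    "P = {m \<in> mcar M. \<forall>W\<in>C. \<forall>f. hom M W f \<longrightarrow> f m = mzero W}"
    using I unfolding Mideal_def by blast
  show ?thesis unfolding submod_def C(2)
  proof (intro conjI ballI allI)
    show "mzero M \<in> {m \<in> mcar M. \<forall>W\<in>C. \<forall>f. hom M W f \<longrightarrow> f m = mzero W}"
      using C(1) hom_zero lm by blast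
  next
    fix x y assume x: "x \<in> {m \<in> mcar M. \<forall>W\<in>C. \<forall>f. hom M W f \<longrightarrow> f m = mzero W}"
      and y: "y \<in> {m \<in> mcar M. \<forall>W\<in>C. \<forall>f. hom M W f \<longrightarrow> f m = mzero W}"
    show "madd M x y \<in> {m \<in> mcar M. \<forall>W\<in>C. \<forall>f. hom M W f \<longrightarrow> f m = mzero W}"
    proof (safe)
      show "madd M x y \<in> mcar M" using x y lm by simp
      fix W f assume "W \<in> C" "hom M W f"
      moreover have "x \<in> mcar M" "y \<in> mcar M" using x y by auto
      ultimately have "f (madd M x y) = madd W (f x) (f y)" using homD(2)[of M W f x y] by blast
      moreover have "f x = mzero W" "f y = mzero W" using x y \<open>W \<in> C\<close> \<open>hom M W f\<close> by auto
      moreover have "is_lmodule W" using C(1) \<open>W \<in> C\<close> by blast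
      ultimately show "f (madd M x y) = mzero W" by simp
    qed
  next
    fix r x assume x: "x \<in> {m \<in> mcar M. \<forall>W\<in>C. \<forall>f. hom M W f \<longrightarrow> f m = mzero W}"
    show "msmult M r x \<in> {m \<in> mcar M. \<forall>W\<in>C. \<forall>f. hom M W f \<longrightarrow> f m = mzero W}"
    proof (safe)
      show "msmult M r x \<in> mcar M" using x lm by simp
      fix W f assume "W \<in> C" "hom M W f"
      moreover have "x \<in> mcar M" using x by auto
      ultimately have "f (msmult M r x) = msmult W r (f x)" using homD(3)[of M W f x r] by blast
      moreover have "f x = mzero W" using x \<open>W \<in> C\<close> \<open>hom M W f\<close> by auto
      moreover have "is_lmodule W" using C(1) \<open>W \<in> C\<close> by blast
      ultimately show "f (msmult M r x) = mzero W" by simp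
    qed
  qed auto
qed

lemma Mideal_inv: assumes I: "Mideal M P" and k: "hom M M k" and p: "p \<in> P" shows "k p \<in> P"
proof -
  obtain C :: "('a, 'b) lmodule set" where C: "\<forall>W\<in>C. is_lmodule W"
    "P = {m \<in> mcar M. \<forall>W\<in>C. \<forall>f. hom M W f \<longrightarrow> f m = mzero W}"
    using I unfolding Mideal_def by blast
  have pM: "p \<in> mcar M" using p C(2) by blast
  show ?thesis unfolding C(2)
  proof (safe)
    show "k p \<in> mcar M" using homD(1)[OF k pM] .
    fix W f assume "W \<in> C" "hom M W f"
    then have "hom M W (f \<circ> k)" using hom_comp k by blast
    then show "f (k p) = mzero W" using p C(2) \<open>W \<in> C\<close> by auto
  qed
qed



lemma lin_submod:
  assumes lm: "is_lmodule X" and e: "\<forall>i\<in>I. e i \<in> mcar X"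
  shows "submod X {y. \<exists>l. (\<forall>p\<in>set l. snd p \<in> I) \<and> y = msum X (map (\<lambda>p. msmult X (fst p) (e (snd p))) l)}"
    (is "submod X ?S")
proof -
  have inX: "set (map (\<lambda>p. msmult X (fst p) (e (snd p))) l) \<subseteq> mcar X" if "\<forall>p\<in>set l. snd p \<in> I" for l
  proof
    fix z assume "z \<in> set (map (\<lambda>p. msmult X (fst p) (e (snd p))) l)"
    then obtain p where p: "p \<in> set l" "z = msmult X (fst p) (e (snd p))" by auto
    then have "e (snd p) \<in> mcar X" using that e by blast
    then show "z \<in> mcar X" using p(2) lm_smult[OF lm] by simp
  qed
  show ?thesis unfolding submod_def
  proof (intro conjI ballI allI)
    show "?S \<subseteq> mcar X" using inX msum_in[OF lm] by blast
    show "mzero X \<in> ?S" by (rule CollectI, rule exI[of _ "[]"]) simp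
  next
    fix a b assume "a \<in> ?S" "b \<in> ?S"
    then obtain l1 l2 where l1: "\<forall>p\<in>set l1. snd p \<in> I" "a = msum X (map (\<lambda>p. msmult X (fst p) (e (snd p))) l1)"
      and l2: "\<forall>p\<in>set l2. snd p \<in> I" "b = msum X (map (\<lambda>p. msmult X (fst p) (e (snd p))) l2)" by blast
    have "madd X a b = msum X (map (\<lambda>p. msmult X (fst p) (e (snd p))) (l1 @ l2))"
      using msum_append[OF lm inX[OF l1(1)] inX[OF l2(1)]] l1 l2 by simp
    moreover have "\<forall>p\<in>set (l1 @ l2). snd p \<in> I" using l1 l2 by auto
    ultimately show "madd X a b \<in> ?S" by blast
  next
    fix r a assume "a \<in> ?S"
    then obtain l where l: "\<forall>p\<in>set l. snd p \<in> I" "a = msum X (map (\<lambda>p. msmult X (fst p) (e (snd p))) l)" by blast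
    define l' where "l' = map (\<lambda>p. (r * fst p, snd p)) l"
    have "msmult X r a = msum X (map (msmult X r) (map (\<lambda>p. msmult X (fst p) (e (snd p))) l))"
      using msum_smult[OF lm inX[OF l(1)]] l by simp
    also have "map (msmult X r) (map (\<lambda>p. msmult X (fst p) (e (snd p))) l) = map (\<lambda>p. msmult X (fst p) (e (snd p))) l'"
    proof -
      have "\<And>p. p \<in> set l \<Longrightarrow> msmult X r (msmult X (fst p) (e (snd p))) = msmult X (r * fst p) (e (snd p))"
        using l(1) e lm_smassoc[OF lm] by simp
      then show ?thesis unfolding l'_def by simp
    qed
    finally have "msmult X r a = msum X (map (\<lambda>p. msmult X (fst p) (e (snd p))) l')" .
    moreover have "\<forall>p\<in>set l'. snd p \<in> I" unfolding l'_def using l(1) by auto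
    ultimately show "msmult X r a \<in> ?S" by blast
  qed
qed

lemma lin_mem: assumes lm: "is_lmodule X" "i \<in> I" "e i \<in> mcar X"
  shows "e i \<in> {y. \<exists>l. (\<forall>p\<in>set l. snd p \<in> I) \<and> y = msum X (map (\<lambda>p. msmult X (fst p) (e (snd p))) l)}"
proof -
  have "e i = msum X (map (\<lambda>p. msmult X (fst p) (e (snd p))) [(1, i)])" using assms by simp
  then show ?thesis using assms(2) by (intro CollectI exI[of _ "[(1, i)]"]) auto
qed

lemma fam_submod:
  assumes lm: "is_lmodule X" and lmM: "is_lmodule M" and H: "\<And>c. hom M X (H c)"
  shows "submod X {y. \<exists>l. (\<forall>p\<in>set l. snd p \<in> mcar M) \<and> y = msum X (map (\<lambda>p. H (fst p) (snd p)) l)}"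
    (is "submod X ?S")
proof -
  have inX: "set (map (\<lambda>p. H (fst p) (snd p)) l) \<subseteq> mcar X" if "\<forall>p\<in>set l. snd p \<in> mcar M" for l
  proof
    fix z assume "z \<in> set (map (\<lambda>p. H (fst p) (snd p)) l)"
    then obtain p where p: "p \<in> set l" "z = H (fst p) (snd p)" by auto
    then show "z \<in> mcar X" using that homD(1)[OF H[of "fst p"], of "snd p"] by simp
  qed
  show ?thesis unfolding submod_def
  proof (intro conjI ballI allI)
    show "?S \<subseteq> mcar X" using inX msum_in[OF lm] by blast
    show "mzero X \<in> ?S" by (rule CollectI, rule exI[of _ "[]"]) simp
  next
    fix a b assume "a \<in> ?S" "b \<in> ?S"
    then obtain l1 l2 where l1: "\<forall>p\<in>set l1. snd p \<in> mcar M" "a = msum X (map (\<lambda>p. H (fst p) (snd p)) l1)"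
      and l2: "\<forall>p\<in>set l2. snd p \<in> mcar M" "b = msum X (map (\<lambda>p. H (fst p) (snd p)) l2)" by blast
    have "madd X a b = msum X (map (\<lambda>p. H (fst p) (snd p)) (l1 @ l2))"
      using msum_append[OF lm inX[OF l1(1)] inX[OF l2(1)]] l1 l2 by simp
    moreover have "\<forall>p\<in>set (l1 @ l2). snd p \<in> mcar M" using l1 l2 by auto
    ultimately show "madd X a b \<in> ?S" by blast
  next
    fix r a assume "a \<in> ?S"
    then obtain l where l: "\<forall>p\<in>set l. snd p \<in> mcar M" "a = msum X (map (\<lambda>p. H (fst p) (snd p)) l)" by blast
    define l' where "l' = map (\<lambda>p. (fst p, msmult M r (snd p))) l"
    have "msmult X r a = msum X (map (msmult X r) (map (\<lambda>p. H (fst p) (snd p)) l))"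
      using msum_smult[OF lm inX[OF l(1)]] l by simp
    also have "map (msmult X r) (map (\<lambda>p. H (fst p) (snd p)) l) = map (\<lambda>p. H (fst p) (snd p)) l'"
    proof -
      have "\<And>p. p \<in> set l \<Longrightarrow> msmult X r (H (fst p) (snd p)) = H (fst p) (msmult M r (snd p))"
        using l(1) homD(3)[OF H] by simp
      then show ?thesis unfolding l'_def by simp
    qed
    finally have "msmult X r a = msum X (map (\<lambda>p. H (fst p) (snd p)) l')" .
    moreover have "\<forall>p\<in>set l'. snd p \<in> mcar M" unfolding l'_def using l(1) lm_smult[OF lmM] by auto
    ultimately show "msmult X r a \<in> ?S" by blast
  qed
qed

lemma fam_mem: assumes lm: "is_lmodule X" "hom M X (H c)" "x \<in> mcar M"
  shows "H c x \<in> {y. \<exists>l. (\<forall>p\<in>set l. snd p \<in> mcar M) \<and> y = msum X (map (\<lambda>p. H (fst p) (snd p)) l)}"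
proof -
  have "H c x = msum X (map (\<lambda>p. H (fst p) (snd p)) [(c, x)])" using assms homD(1)[OF assms(2,3)] by simp
  then show ?thesis using assms(3) by (intro CollectI exI[of _ "[(c, x)]"]) auto
qed

lemma zero_hom: "is_lmodule Y \<Longrightarrow> hom M Y (\<lambda>_. mzero Y)"
  unfolding hom_def by simp


lemma comp_inj3: "inj_on f A \<Longrightarrow> inj_on g (f ` A) \<Longrightarrow> inj_on k (g ` f ` A) \<Longrightarrow> inj_on (k \<circ> g \<circ> f) A"
  by (simp add: comp_inj_on)

lemma small_sigma:
  fixes M :: "('r::{ring,monoid_mult}, 'm) lmodule" and A :: "('r, 'a) lmodule"
    and a :: "'m \<Rightarrow> 'a" and \<phi> :: "'a \<Rightarrow> ('r \<times> 'm) list"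
  assumes lmM: "is_lmodule M" and lmA: "is_lmodule A" and sig: "in_sigma M A"
    and aA: "\<forall>m\<in>mcar M. a m \<in> mcar A"
    and A1sub: "\<forall>x\<in>A1. \<exists>l. (\<forall>p\<in>set l. snd p \<in> mcar M) \<and> x = msum A (map (\<lambda>p. msmult A (fst p) (a (snd p))) l)"
    and sA1: "submod A A1" and inj: "inj_on \<phi> A1"
  shows "in_sigma M (trans (subm A A1) \<phi>)"
proof -
  obtain Y :: "('r, ('a \<times> 'm) list) lmodule" and h where Y: "is_lmodule Y" "Mgenerated M Y" "hom A Y h" "inj_on h (mcar A)"
    using sig unfolding in_sigma_def by blast
  define PS where "PS m = (\<lambda>ps. (\<forall>p\<in>set ps. hom M Y (fst p) \<and> snd p \<in> mcar M) \<and> h (a m) = msum Y (map (\<lambda>p. fst p (snd p)) ps))" for m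
  define ps where "ps m = (SOME ps. PS m ps)" for m
  have psP: "PS m (ps m)" if "m \<in> mcar M" for m
  proof -
    have "h (a m) \<in> mcar Y" using homD(1)[OF Y(3)] aA that by blast
    then have "\<exists>ps. PS m ps" unfolding PS_def using Mgen_rep[OF lmM Y(1) Y(2)] by blast
    then show ?thesis unfolding ps_def by (rule someI_ex)
  qed
  define G :: "('r \<times> 'm) list \<Rightarrow> 'm \<Rightarrow> ('a \<times> 'm) list" where
    "G c = (if c \<noteq> [] \<and> snd (hd c) \<in> mcar M \<and> length c - 1 < length (ps (snd (hd c)))
            then fst (ps (snd (hd c)) ! (length c - 1)) else (\<lambda>_. mzero Y))" for c
  have Gh: "hom M Y (G c)" for c
  proof (cases "c \<noteq> [] \<and> snd (hd c) \<in> mcar M \<and> length c - 1 < length (ps (snd (hd c)))")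
    case True
    then have "ps (snd (hd c)) ! (length c - 1) \<in> set (ps (snd (hd c)))" by simp
    then show ?thesis using True psP[of "snd (hd c)"] unfolding G_def PS_def by auto
  next
    case False
    then have "G c = (\<lambda>_. mzero Y)" unfolding G_def by (rule if_not_P)
    then show ?thesis using zero_hom[OF Y(1)] by simp
  qed
  define Y0 where "Y0 = {y. \<exists>l. (\<forall>p\<in>set l. snd p \<in> mcar M) \<and> y = msum Y (map (\<lambda>p. G (fst p) (snd p)) l)}"
  have sY0: "submod Y Y0" unfolding Y0_def using fam_submod[OF Y(1) lmM Gh] .
  have GY0: "G c x \<in> Y0" if "x \<in> mcar M" for c x
    unfolding Y0_def using fam_mem[OF Y(1) Gh that] .
  have haY0: "h (a m) \<in> Y0" if m: "m \<in> mcar M" for m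
  proof -
    have P: "PS m (ps m)" using psP m .
    have "set (map (\<lambda>p. fst p (snd p)) (ps m)) \<subseteq> Y0"
    proof
      fix z assume "z \<in> set (map (\<lambda>p. fst p (snd p)) (ps m))"
      then obtain i where i: "i < length (ps m)" "z = fst (ps m ! i) (snd (ps m ! i))"
        by (auto simp: in_set_conv_nth)
      define c where "c = replicate (Suc i) (0::'r, m)"
      have "G c = fst (ps m ! i)" unfolding G_def c_def using i m by simp
      moreover have "snd (ps m ! i) \<in> mcar M" using P i unfolding PS_def by (meson nth_mem)
      ultimately show "z \<in> Y0" using GY0 i by metis
    qed
    then show ?thesis using P msum_submod[OF sY0] unfolding PS_def by simp
  qed
  have A1A: "A1 \<subseteq> mcar A" using sA1 submodD by blast
  have hA1: "h x \<in> Y0" if x: "x \<in> A1" for x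
  proof -
    obtain l where l: "\<forall>p\<in>set l. snd p \<in> mcar M" "x = msum A (map (\<lambda>p. msmult A (fst p) (a (snd p))) l)"
      using A1sub x by blast
    have inA: "set (map (\<lambda>p. msmult A (fst p) (a (snd p))) l) \<subseteq> mcar A" using l(1) aA lm_smult[OF lmA] by auto
    have "h x = msum Y (map h (map (\<lambda>p. msmult A (fst p) (a (snd p))) l))"
      using hom_msum[OF Y(3) lmA Y(1) inA] l(2) by simp
    also have "map h (map (\<lambda>p. msmult A (fst p) (a (snd p))) l) = map (\<lambda>p. msmult Y (fst p) (h (a (snd p)))) l"
      using l(1) aA homD(3)[OF Y(3)] by simp
    finally have hx: "h x = msum Y (map (\<lambda>p. msmult Y (fst p) (h (a (snd p)))) l)" .
    have "set (map (\<lambda>p. msmult Y (fst p) (h (a (snd p)))) l) \<subseteq> Y0"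
      using l(1) haY0 submodD(4)[OF sY0] by auto
    then show ?thesis using hx msum_submod[OF sY0] by simp
  qed
  define L0 :: "(('r \<times> 'm) list \<times> 'm) list set" where "L0 = {l. \<forall>p\<in>set l. snd p \<in> mcar M}"
  define eval0 where "eval0 l = msum Y (map (\<lambda>p. G (fst p) (snd p)) l)" for l
  define rep where "rep y = (SOME l. l \<in> L0 \<and> eval0 l = y)" for y
  have repP: "rep y \<in> L0 \<and> eval0 (rep y) = y" if "y \<in> Y0" for y
  proof -
    have "\<exists>l. l \<in> L0 \<and> eval0 l = y" using that unfolding Y0_def L0_def eval0_def by auto
    then show ?thesis unfolding rep_def by (rule someI_ex)
  qed
  have injr: "inj_on rep Y0"
    by (rule inj_onI) (metis repP)
  have lmY0: "is_lmodule (subm Y Y0)" using submod_lm[OF Y(1) sY0] .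
  define Yn where "Yn = trans (subm Y Y0) rep"
  have lmYn: "is_lmodule Yn" unfolding Yn_def using trans_lm[OF lmY0] injr by simp
  have repH: "hom (subm Y Y0) Yn rep" unfolding Yn_def using trans_hom[OF lmY0] injr by simp
  have Y0Y: "Y0 \<subseteq> mcar Y" using sY0 submodD by blast
  have GYn: "hom M Yn (rep \<circ> G c)" for c
  proof -
    have "hom M (subm Y Y0) (G c)" using hom_subm_iff[OF Y0Y] Gh GY0 by blast
    then show ?thesis using hom_comp repH by blast
  qed
  have "Mgenerated M Yn"
  proof (rule Mgen_intro[OF lmYn])
    fix y assume "y \<in> mcar Yn"
    then obtain z where z: "z \<in> Y0" "y = rep z" unfolding Yn_def trans_simps by auto
    then obtain l where l: "\<forall>p\<in>set l. snd p \<in> mcar M" "z = msum Y (map (\<lambda>p. G (fst p) (snd p)) l)"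
      unfolding Y0_def by blast
    have inY0: "set (map (\<lambda>p. G (fst p) (snd p)) l) \<subseteq> mcar (subm Y Y0)" using l(1) GY0 by auto
    have "y = msum Yn (map rep (map (\<lambda>p. G (fst p) (snd p)) l))"
      using hom_msum[OF repH lmY0 lmYn inY0] z l by simp
    moreover have "set (map rep (map (\<lambda>p. G (fst p) (snd p)) l)) \<subseteq> \<Union>{f ` mcar M | f. hom M Yn f}"
    proof
      fix w assume "w \<in> set (map rep (map (\<lambda>p. G (fst p) (snd p)) l))"
      then obtain p where p: "p \<in> set l" "w = (rep \<circ> G (fst p)) (snd p)" by auto
      then have "w \<in> (rep \<circ> G (fst p)) ` mcar M" using l(1) by auto
      then show "w \<in> \<Union>{f ` mcar M | f. hom M Yn f}" using GYn by blast
    qed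
    ultimately show "\<exists>xs. set xs \<subseteq> \<Union>{f ` mcar M | f. hom M Yn f} \<and> y = msum Yn xs" by blast
  qed
  have lmA1: "is_lmodule (subm A A1)" using submod_lm[OF lmA sA1] .
  define iv where "iv = the_inv_into A1 \<phi>"
  have ivH: "hom (trans (subm A A1) \<phi>) (subm A A1) iv"
    unfolding iv_def using trans_inv_hom[OF lmA1] inj by simp
  have hH: "hom (subm A A1) (subm Y Y0) h"
    unfolding hom_subm_iff[OF Y0Y] using hom_from_subm[OF Y(3) A1A] hA1 by simp
  have kH: "hom (trans (subm A A1) \<phi>) Yn (rep \<circ> h \<circ> iv)"
    using hom_comp[OF hom_comp[OF ivH hH] repH] by (simp add: comp_assoc)
  have ivimg: "iv ` mcar (trans (subm A A1) \<phi>) = A1"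
    unfolding iv_def trans_simps subm_simps using the_inv_into_onto[OF inj] .
  have "inj_on (rep \<circ> h \<circ> iv) (mcar (trans (subm A A1) \<phi>))"
  proof (rule comp_inj3)
    show "inj_on iv (mcar (trans (subm A A1) \<phi>))" unfolding iv_def trans_simps subm_simps
      using inj inj_on_the_inv_into by blast
    show "inj_on h (iv ` mcar (trans (subm A A1) \<phi>))" using ivimg Y(4) A1A inj_on_subset by metis
    show "inj_on rep (h ` iv ` mcar (trans (subm A A1) \<phi>))" using ivimg hA1 injr inj_on_subset
      by (metis image_subsetI)
  qed
  then show ?thesis unfolding in_sigma_def using lmYn \<open>Mgenerated M Yn\<close> kH by blast
qed


lemma lift:
  fixes M :: "('r::{ring,monoid_mult}, 'm) lmodule" and A :: "('r, 'a) lmodule" and B :: "('r, 'b) lmodule"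
  assumes lmM: "is_lmodule M" and proj: "proj_sigma M" and lmA: "is_lmodule A" and sig: "in_sigma M A"
    and lmB: "is_lmodule B" and g: "hom A B g" and gs: "f ` mcar M \<subseteq> g ` mcar A" and f: "hom M B f"
  shows "\<exists>h. hom M A h \<and> (\<forall>m\<in>mcar M. g (h m) = f m)"
proof -
  define a where "a m = (SOME x. x \<in> mcar A \<and> g x = f m)" for m
  have aP: "a m \<in> mcar A \<and> g (a m) = f m" if "m \<in> mcar M" for m
  proof -
    have "f m \<in> g ` mcar A" using gs that by blast
    then have "\<exists>x. x \<in> mcar A \<and> g x = f m" by (metis imageE)
    then show ?thesis unfolding a_def by (rule someI_ex)
  qed
  have aA: "\<forall>m\<in>mcar M. a m \<in> mcar A" using aP by blast
  define A0 where "A0 = {y. \<exists>l. (\<forall>p\<in>set l. snd p \<in> mcar M) \<and> y = msum A (map (\<lambda>p. msmult A (fst p) (a (snd p))) l)}"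
  have sA0: "submod A A0" unfolding A0_def using lin_submod[OF lmA aA] .
  define B1 where "B1 = f ` mcar M"
  have sB1: "submod B B1" unfolding B1_def using hom_image_submod[OF lmM lmB f submod_full[OF lmM]] .
  define A1 where "A1 = A0 \<inter> {x \<in> mcar A. g x \<in> B1}"
  have sA1: "submod A A1" unfolding A1_def using submod_inter[OF sA0 hom_preimage_submod[OF lmA lmB g sB1]] .
  have A1A: "A1 \<subseteq> mcar A" using sA1 submodD by blast
  have B1B: "B1 \<subseteq> mcar B" using sB1 submodD by blast
  define L :: "('r \<times> 'm) list set" where "L = {l. \<forall>p\<in>set l. snd p \<in> mcar M}"
  define \<phi> where "\<phi> x = (SOME l. l \<in> L \<and> x = msum A (map (\<lambda>p. msmult A (fst p) (a (snd p))) l))" for x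
  have \<phi>P: "\<phi> x \<in> L \<and> x = msum A (map (\<lambda>p. msmult A (fst p) (a (snd p))) (\<phi> x))" if "x \<in> A1" for x
  proof -
    have "\<exists>l. l \<in> L \<and> x = msum A (map (\<lambda>p. msmult A (fst p) (a (snd p))) l)"
      using that unfolding A1_def A0_def L_def by blast
    then show ?thesis unfolding \<phi>_def by (rule someI_ex)
  qed
  have inj\<phi>: "inj_on \<phi> A1" by (rule inj_onI) (metis \<phi>P)
  define \<psi> :: "'b \<Rightarrow> ('r \<times> 'm) list" where "\<psi> b = [(1, SOME m. m \<in> mcar M \<and> f m = b)]" for b
  have \<psi>P: "(SOME m. m \<in> mcar M \<and> f m = b) \<in> mcar M \<and> f (SOME m. m \<in> mcar M \<and> f m = b) = b" if "b \<in> B1" for b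
  proof -
    have "\<exists>m. m \<in> mcar M \<and> f m = b" using that unfolding B1_def by blast
    then show ?thesis by (rule someI_ex)
  qed
  have inj\<psi>: "inj_on \<psi> B1"
  proof (rule inj_onI)
    fix b b' assume "b \<in> B1" "b' \<in> B1" "\<psi> b = \<psi> b'"
    then have "(SOME m. m \<in> mcar M \<and> f m = b) = (SOME m. m \<in> mcar M \<and> f m = b')" unfolding \<psi>_def by simp
    then show "b = b'" using \<psi>P[OF \<open>b \<in> B1\<close>] \<psi>P[OF \<open>b' \<in> B1\<close>] by metis
  qed
  have A1sub: "\<forall>x\<in>A1. \<exists>l. (\<forall>p\<in>set l. snd p \<in> mcar M) \<and> x = msum A (map (\<lambda>p. msmult A (fst p) (a (snd p))) l)"
    unfolding A1_def A0_def by blast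
  have lmA1: "is_lmodule (subm A A1)" using submod_lm[OF lmA sA1] .
  have lmB1: "is_lmodule (subm B B1)" using submod_lm[OF lmB sB1] .
  define TA where "TA = trans (subm A A1) \<phi>"
  define TB where "TB = trans (subm B B1) \<psi>"
  have lmTA: "is_lmodule TA" unfolding TA_def using trans_lm[OF lmA1] inj\<phi> by simp
  have lmTB: "is_lmodule TB" unfolding TB_def using trans_lm[OF lmB1] inj\<psi> by simp
  have sigA: "in_sigma M TA" unfolding TA_def using small_sigma[OF lmM lmA sig aA A1sub sA1 inj\<phi>] .
  have fB1: "hom M (subm B B1) f" unfolding hom_subm_iff[OF B1B] using f B1_def by simp
  have \<psi>H: "hom (subm B B1) TB \<psi>" unfolding TB_def using trans_hom[OF lmB1] inj\<psi> by simp
  have f'H: "hom M TB (\<psi> \<circ> f)" using hom_comp[OF fB1 \<psi>H] .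
  have f'S: "(\<psi> \<circ> f) ` mcar M = mcar TB" unfolding TB_def trans_simps subm_simps B1_def by auto
  have sigB: "in_sigma M TB" using in_sigma_surj[OF lmTB f'H f'S] .
  define iv where "iv = the_inv_into A1 \<phi>"
  have ivH: "hom TA (subm A A1) iv" unfolding iv_def TA_def using trans_inv_hom[OF lmA1] inj\<phi> by simp
  have gH: "hom (subm A A1) (subm B B1) g"
    unfolding hom_subm_iff[OF B1B] using hom_from_subm[OF g A1A] A1_def by simp
  have g'H: "hom TA TB (\<psi> \<circ> g \<circ> iv)" using hom_comp[OF hom_comp[OF ivH gH] \<psi>H] by (simp add: comp_assoc)
  have ivimg: "iv ` mcar TA = A1"
    unfolding iv_def TA_def trans_simps subm_simps using the_inv_into_onto[OF inj\<phi>] .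
  have g'S: "(\<psi> \<circ> g \<circ> iv) ` mcar TA = mcar TB"
  proof
    show "(\<psi> \<circ> g \<circ> iv) ` mcar TA \<subseteq> mcar TB" using homD(1)[OF g'H] by blast
    show "mcar TB \<subseteq> (\<psi> \<circ> g \<circ> iv) ` mcar TA"
    proof
      fix y assume "y \<in> mcar TB"
      then obtain m where m: "m \<in> mcar M" "y = \<psi> (f m)" unfolding TB_def trans_simps subm_simps B1_def by auto
      have "a m = msum A (map (\<lambda>p. msmult A (fst p) (a (snd p))) [(1, m)])" using aP[OF m(1)] lmA by simp
      then have "a m \<in> A0" unfolding A0_def using m(1) by (intro CollectI exI[of _ "[(1, m)]"]) auto
      then have amA1: "a m \<in> A1" unfolding A1_def B1_def using aP[OF m(1)] m(1) by auto
      then have "iv (\<phi> (a m)) = a m" unfolding iv_def using the_inv_into_f_f[OF inj\<phi>] by simp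
      then have "(\<psi> \<circ> g \<circ> iv) (\<phi> (a m)) = y" using aP[OF m(1)] m(2) by simp
      moreover have "\<phi> (a m) \<in> mcar TA" unfolding TA_def trans_simps subm_simps using amA1 by simp
      ultimately show "y \<in> (\<psi> \<circ> g \<circ> iv) ` mcar TA" by (metis image_eqI)
    qed
  qed
  obtain h' where h': "hom M TA h'" "\<forall>m\<in>mcar M. (\<psi> \<circ> g \<circ> iv) (h' m) = (\<psi> \<circ> f) m"
    using proj[unfolded proj_sigma_def, rule_format, of TA TB "\<psi> \<circ> g \<circ> iv" "\<psi> \<circ> f"]
      lmTA lmTB sigA sigB g'H g'S f'H by blast
  have hH: "hom M (subm A A1) (iv \<circ> h')" using hom_comp[OF h'(1) ivH] .
  then have hA: "hom M A (iv \<circ> h')" using hom_subm_iff[OF A1A] by blast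
  have "\<forall>m\<in>mcar M. g ((iv \<circ> h') m) = f m"
  proof
    fix m assume m: "m \<in> mcar M"
    have "(iv \<circ> h') m \<in> A1" using homD(1)[OF hH m] by simp
    then have "g ((iv \<circ> h') m) \<in> B1" unfolding A1_def by simp
    moreover have "f m \<in> B1" unfolding B1_def using m by simp
    moreover have "\<psi> (g ((iv \<circ> h') m)) = \<psi> (f m)" using h'(2) m by simp
    ultimately show "g ((iv \<circ> h') m) = f m" using inj\<psi> inj_onD by metis
  qed
  then show ?thesis using hA by blast
qed



lemma in_sigma_self: "is_lmodule M \<Longrightarrow> in_sigma M M"
  using in_sigma_surj[of M M id] hom_id[of M] by simp

lemma part1:
  fixes M :: "('r::{ring,monoid_mult}, 'm) lmodule" and X :: "('r, 'x) lmodule"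
  assumes lmM: "is_lmodule M" and proj: "proj_sigma M" and lmX: "is_lmodule X" and sig: "in_sigma M X"
    and pr: "Mprime_sub M X P"
  shows "Mprime_module M (quot X P)"
proof -
  have sP: "submod X P" and PX: "P \<noteq> mcar X" using pr unfolding Mprime_sub_def by auto
  define Q where "Q = quot X P"
  have lmQ: "is_lmodule Q" unfolding Q_def using quot_lm[OF lmX sP] .
  have \<pi>H: "hom X Q (coset X P)" unfolding Q_def using quot_hom[OF lmX sP] .
  have Qz: "mzero Q = P" unfolding Q_def using quot_zero[OF lmX sP] .
  have Qc: "mcar Q = coset X P ` mcar X" unfolding Q_def using quot_car[OF lmX sP] .
  have PQ: "P \<in> mcar Q" using lm_zero[OF lmQ] Qz by simp
  have ne: "mcar Q \<noteq> {P}" unfolding Q_def using quot_ne[OF lmX sP PX] .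
  have sz: "submod Q {P}" unfolding submod_def using PQ Qz lm_lzero[OF lmQ] lm_smult0[OF lmQ] by auto
  have main: "mprod M N Q \<subseteq> {P} \<or> Yb \<subseteq> {P}"
    if sN: "submod M N" and sYb: "submod Q Yb" and hyp: "mprod M N (subm Q Yb) \<subseteq> {P}" for N Yb
  proof -
    have NM: "N \<subseteq> mcar M" using sN submodD by blast
    have YbQ: "Yb \<subseteq> mcar Q" using sYb submodD by blast
    have lmYb: "is_lmodule (subm Q Yb)" using submod_lm[OF lmQ sYb] .
    have killYb: "kills M N (subm Q Yb)" using kills_of_mprod[of M N "subm Q Yb"] hyp Qz NM by simp
    define Y where "Y = {x \<in> mcar X. coset X P x \<in> Yb}"
    have sY: "submod X Y" unfolding Y_def using hom_preimage_submod[OF lmX lmQ \<pi>H sYb] .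
    have YX: "Y \<subseteq> mcar X" using sY submodD by blast
    have NY: "mprod M N (subm X Y) \<subseteq> P"
    proof
      fix x assume x: "x \<in> mprod M N (subm X Y)"
      define rep where "rep c = (SOME a. a \<in> c)" for c :: "'x set"
      have injr: "inj_on rep Yb" unfolding rep_def using quot_rep_inj[OF lmX sP] YbQ Q_def inj_on_subset by metis
      define T where "T = trans (subm Q Yb) rep"
      have lmT: "is_lmodule T" unfolding T_def using trans_lm[OF lmYb] injr by simp
      have killT: "kills M N T" unfolding T_def
        using kills_iso[OF killYb trans_inv_hom[OF lmYb] trans_inv_inj[OF lmYb] _ lmYb NM] injr lmT T_def by simp
      have cH: "hom (subm X Y) (subm Q Yb) (coset X P)"
        unfolding hom_subm_iff[OF YbQ] using hom_from_subm[OF \<pi>H YX] Y_def by simp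
      have kH: "hom (subm X Y) T (rep \<circ> coset X P)"
        unfolding T_def using hom_comp[OF cH trans_hom[OF lmYb]] injr by simp
      have "(rep \<circ> coset X P) x = mzero T"
        using x lmT killT kH unfolding mprod_def by blast
      then have "rep (coset X P x) = rep P" unfolding T_def trans_simps subm_simps Qz by simp
      moreover have "coset X P x \<in> Yb" using x mprod_sub[of M N "subm X Y"] Y_def by auto
      moreover have "P \<in> Yb" using submodD(2)[OF sYb] Qz by simp
      ultimately have "coset X P x = P" using injr inj_onD by metis
      moreover have "x \<in> mcar X" using x mprod_sub[of M N "subm X Y"] YX by auto
      ultimately show "x \<in> P" using coset_zero[OF lmX sP] by blast
    qed
    then have "mprod M N X \<subseteq> P \<or> Y \<subseteq> P" using pr sN sY unfolding Mprime_sub_def by blast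
    then show ?thesis
    proof
      assume YP: "Y \<subseteq> P"
      have "Yb \<subseteq> {P}"
      proof
        fix c assume c: "c \<in> Yb"
        then obtain x where x: "x \<in> mcar X" "c = coset X P x" using YbQ Qc by auto
        then have "x \<in> Y" using c Y_def by simp
        then show "c \<in> {P}" using YP x coset_zero[OF lmX sP] by auto
      qed
      then show ?thesis by blast
    next
      assume NX: "mprod M N X \<subseteq> P"
      have "kills M N Q" unfolding kills_def
      proof (intro allI impI ballI)
        fix k n assume k: "hom M Q k" and n: "n \<in> N"
        have gs: "k ` mcar M \<subseteq> coset X P ` mcar X" using homD(1)[OF k] Qc by blast
        obtain h where h: "hom M X h" "\<forall>m\<in>mcar M. coset X P (h m) = k m"
          using lift[OF lmM proj lmX sig lmQ \<pi>H gs k] by blast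
        have nM: "n \<in> mcar M" using n NM by blast
        have "h n \<in> mprod M N X" using mprod_fun[OF h(1) nM n] .
        then have "h n \<in> P" using NX by blast
        then have "coset X P (h n) = P" using coset_zero[OF lmX sP] homD(1)[OF h(1) nM] by blast
        then show "k n = mzero Q" using h(2) nM Qz by simp
      qed
      then show ?thesis using mprod_of_kills[OF _ lmQ] Qz by blast
    qed
  qed
  have "Mprime_sub M Q {P}" unfolding Mprime_sub_def
    using sz ne PQ main by (auto simp: Qz)
  then show ?thesis unfolding Mprime_module_def Q_def[symmetric] using ne Qz by simp
qed


lemma p12:
  fixes M :: "('r::{ring,monoid_mult}, 'm) lmodule"
  assumes lmM: "is_lmodule M" and proj: "proj_sigma M" and I: "Mideal M P" and PM: "P \<noteq> mcar M"
    and pm: "prime_Mideal TYPE('y) M P"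
  shows "Mprime_sub M M P"
proof -
  obtain X' :: "('r, 'y) lmodule" where X': "is_lmodule X'" "Mprime_module M X'" "P = Ann M X'"
    using pm unfolding prime_Mideal_def by blast
  have sP: "submod M P" using Mideal_submod[OF lmM I] .
  have prX: "Mprime_sub M X' {mzero X'}" using X'(2) unfolding Mprime_module_def by blast
  have main: "mprod M N M \<subseteq> P \<or> Y \<subseteq> P"
    if sN: "submod M N" and sY: "submod M Y" and hyp: "mprod M N (subm M Y) \<subseteq> P" for N Y
  proof (cases "Y \<subseteq> P")
    case True then show ?thesis by blast
  next
    case False
    then obtain y where y: "y \<in> Y" "y \<notin> P" by blast
    have NM: "N \<subseteq> mcar M" using sN submodD by blast
    have YM: "Y \<subseteq> mcar M" using sY submodD by blast
    have yM: "y \<in> mcar M" using y YM by blast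
    obtain f where f: "hom M X' f" "f y \<noteq> mzero X'" using y yM X'(3) unfolding Ann_def by blast
    define S where "S = f ` Y"
    have sS: "submod X' S" unfolding S_def using hom_image_submod[OF lmM X'(1) f(1) sY] .
    have SX: "S \<subseteq> mcar X'" using sS submodD by blast
    have lmYs: "is_lmodule (subm M Y)" using submod_lm[OF lmM sY] .
    have lmS: "is_lmodule (subm X' S)" using submod_lm[OF X'(1) sS] .
    have fH: "hom (subm M Y) (subm X' S) f"
      unfolding hom_subm_iff[OF SX] using hom_from_subm[OF f(1) YM] S_def by simp
    have sigY: "in_sigma M (subm M Y)" using in_sigma_subm[OF in_sigma_self[OF lmM] sY] .
    have "kills M N (subm X' S)" unfolding kills_def
    proof (intro allI impI ballI)
      fix k n assume k: "hom M (subm X' S) k" and n: "n \<in> N"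
      have gs: "k ` mcar M \<subseteq> f ` mcar (subm M Y)" using homD(1)[OF k] S_def by auto
      obtain h where h: "hom M (subm M Y) h" "\<forall>m\<in>mcar M. f (h m) = k m"
        using lift[OF lmM proj lmYs sigY lmS fH gs k] by blast
      have nM: "n \<in> mcar M" using n NM by blast
      have "h n \<in> mprod M N (subm M Y)" using mprod_fun[OF h(1) nM n] .
      then have "h n \<in> Ann M X'" using hyp X'(3) by blast
      then have "f (h n) = mzero X'" using f(1) unfolding Ann_def by blast
      then show "k n = mzero (subm X' S)" using h(2) nM by simp
    qed
    then have "mprod M N (subm X' S) \<subseteq> {mzero X'}" using mprod_of_kills[OF _ lmS] by simp
    then have "mprod M N X' \<subseteq> {mzero X'} \<or> S \<subseteq> {mzero X'}"
      using prX sN sS unfolding Mprime_sub_def by blast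
    moreover have "\<not> S \<subseteq> {mzero X'}" using f(2) y S_def by auto
    ultimately have NX: "mprod M N X' \<subseteq> {mzero X'}" by blast
    have killX: "kills M N X'" using kills_of_mprod[OF NX NM] .
    have "mprod M N M \<subseteq> P"
    proof
      fix x assume x: "x \<in> mprod M N M"
      have xM: "x \<in> mcar M" using x mprod_sub[of M N M] by blast
      have "\<forall>f'. hom M X' f' \<longrightarrow> f' x = mzero X'"
      proof (intro allI impI)
        fix f' assume f': "hom M X' f'"
        define S' where "S' = f' ` mcar M"
        have sS': "submod X' S'" unfolding S'_def using hom_image_submod[OF lmM X'(1) f' submod_full[OF lmM]] .
        have S'X: "S' \<subseteq> mcar X'" using sS' submodD by blast
        have lmS': "is_lmodule (subm X' S')" using submod_lm[OF X'(1) sS'] .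
        define iv where "iv = inv_into (mcar M) f'"
        have injv: "inj_on iv (mcar (subm X' S'))" unfolding iv_def S'_def subm_simps
          using inj_on_inv_into by blast
        define T where "T = trans (subm X' S') iv"
        have lmT: "is_lmodule T" unfolding T_def using trans_lm[OF lmS' injv] .
        have killT: "kills M N T" unfolding T_def
          using kills_iso[OF kills_subm[OF killX S'X] trans_inv_hom[OF lmS' injv] trans_inv_inj[OF lmS' injv] _ lmS' NM]
            lmT T_def by simp
        have f'S: "hom M (subm X' S') f'" unfolding hom_subm_iff[OF S'X] using f' S'_def by simp
        have kH: "hom M T (iv \<circ> f')" unfolding T_def using hom_comp[OF f'S trans_hom[OF lmS' injv]] .
        have "(iv \<circ> f') x = mzero T" using x lmT killT kH unfolding mprod_def by blast
        then have "iv (f' x) = iv (mzero X')" unfolding T_def trans_simps subm_simps by simp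
        moreover have "f' x \<in> S'" using xM S'_def by simp
        moreover have "mzero X' \<in> S'" using submodD(2)[OF sS'] .
        ultimately show "f' x = mzero X'" using injv inj_onD by (metis subm_simps(1))
      qed
      then show "x \<in> P" using X'(3) xM unfolding Ann_def by blast
    qed
    then show ?thesis by blast
  qed
  show ?thesis unfolding Mprime_sub_def using sP PM main by blast
qed

lemma p32:
  fixes M :: "('r::{ring,monoid_mult}, 'm) lmodule"
  assumes lmM: "is_lmodule M" and proj: "proj_sigma M" and sP: "submod M P" and PM: "P \<noteq> mcar M"
    and mq: "Mprime_module M (quot M P)"
  shows "Mprime_sub M M P"
proof -
  define Q where "Q = quot M P"
  have lmQ: "is_lmodule Q" unfolding Q_def using quot_lm[OF lmM sP] .
  have \<pi>H: "hom M Q (coset M P)" unfolding Q_def using quot_hom[OF lmM sP] .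
  have Qz: "mzero Q = P" unfolding Q_def using quot_zero[OF lmM sP] .
  have Qc: "mcar Q = coset M P ` mcar M" unfolding Q_def using quot_car[OF lmM sP] .
  have prQ: "Mprime_sub M Q {P}" using mq Qz unfolding Mprime_module_def Q_def by simp
  have main: "mprod M N M \<subseteq> P \<or> Y \<subseteq> P"
    if sN: "submod M N" and sY: "submod M Y" and hyp: "mprod M N (subm M Y) \<subseteq> P" for N Y
  proof -
    have NM: "N \<subseteq> mcar M" using sN submodD by blast
    have YM: "Y \<subseteq> mcar M" using sY submodD by blast
    define Yb where "Yb = coset M P ` Y"
    have sYb: "submod Q Yb" unfolding Yb_def using hom_image_submod[OF lmM lmQ \<pi>H sY] .
    have YbQ: "Yb \<subseteq> mcar Q" using sYb submodD by blast
    have lmYs: "is_lmodule (subm M Y)" using submod_lm[OF lmM sY] .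
    have lmYb: "is_lmodule (subm Q Yb)" using submod_lm[OF lmQ sYb] .
    have cH: "hom (subm M Y) (subm Q Yb) (coset M P)"
      unfolding hom_subm_iff[OF YbQ] using hom_from_subm[OF \<pi>H YM] Yb_def by simp
    have sigY: "in_sigma M (subm M Y)" using in_sigma_subm[OF in_sigma_self[OF lmM] sY] .
    have "kills M N (subm Q Yb)" unfolding kills_def
    proof (intro allI impI ballI)
      fix k n assume k: "hom M (subm Q Yb) k" and n: "n \<in> N"
      have gs: "k ` mcar M \<subseteq> coset M P ` mcar (subm M Y)" using homD(1)[OF k] Yb_def by auto
      obtain h where h: "hom M (subm M Y) h" "\<forall>m\<in>mcar M. coset M P (h m) = k m"
        using lift[OF lmM proj lmYs sigY lmYb cH gs k] by blast
      have nM: "n \<in> mcar M" using n NM by blast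
      have "h n \<in> mprod M N (subm M Y)" using mprod_fun[OF h(1) nM n] .
      then have "h n \<in> P" using hyp by blast
      moreover have "h n \<in> mcar M" using homD(1)[OF h(1) nM] YM by auto
      ultimately have "coset M P (h n) = P" using coset_zero[OF lmM sP] by blast
      then show "k n = mzero (subm Q Yb)" using h(2) nM Qz by simp
    qed
    then have "mprod M N (subm Q Yb) \<subseteq> {P}" using mprod_of_kills[OF _ lmYb] Qz by simp
    then have "mprod M N Q \<subseteq> {P} \<or> Yb \<subseteq> {P}" using prQ sN sYb unfolding Mprime_sub_def by blast
    then show ?thesis
    proof
      assume "Yb \<subseteq> {P}"
      have "Y \<subseteq> P"
      proof
        fix y assume y: "y \<in> Y"
        then have "coset M P y \<in> Yb" unfolding Yb_def by simp
        then have "coset M P y = P" using \<open>Yb \<subseteq> {P}\<close> by blast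
        moreover have "y \<in> mcar M" using y YM by blast
        ultimately show "y \<in> P" using coset_zero[OF lmM sP] by blast
      qed
      then show ?thesis by blast
    next
      assume NQ: "mprod M N Q \<subseteq> {P}"
      have killQ: "kills M N Q" using kills_of_mprod[of M N Q] NQ Qz NM by simp
      have "mprod M N M \<subseteq> P"
      proof
        fix x assume x: "x \<in> mprod M N M"
        have xM: "x \<in> mcar M" using x mprod_sub[of M N M] by blast
        define rep where "rep c = (SOME a. a \<in> c)" for c :: "'m set"
        have injr: "inj_on rep (mcar Q)" unfolding rep_def Q_def using quot_rep_inj[OF lmM sP] .
        define T where "T = trans Q rep"
        have lmT: "is_lmodule T" unfolding T_def using trans_lm[OF lmQ injr] .
        have killT: "kills M N T" unfolding T_def
          using kills_iso[OF killQ trans_inv_hom[OF lmQ injr] trans_inv_inj[OF lmQ injr] _ lmQ NM] lmT T_def by simp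
        have kH: "hom M T (rep \<circ> coset M P)" unfolding T_def using hom_comp[OF \<pi>H trans_hom[OF lmQ injr]] .
        have "(rep \<circ> coset M P) x = mzero T" using x lmT killT kH unfolding mprod_def by blast
        then have "rep (coset M P x) = rep P" unfolding T_def trans_simps Qz by simp
        moreover have "coset M P x \<in> mcar Q" using Qc xM by simp
        moreover have "P \<in> mcar Q" using lm_zero[OF lmQ] Qz by simp
        ultimately have "coset M P x = P" using injr inj_onD by metis
        then show "x \<in> P" using coset_zero[OF lmM sP xM] by blast
      qed
      then show ?thesis by blast
    qed
  qed
  show ?thesis unfolding Mprime_sub_def using sP PM main by blast
qed

lemma p31:
  fixes M :: "('r::{ring,monoid_mult}, 'm) lmodule"
  assumes lmM: "is_lmodule M" and proj: "proj_sigma M" and I: "Mideal M P" and PM: "P \<noteq> mcar M"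
    and mq: "Mprime_module M (quot M P)"
  shows "prime_Mideal TYPE('m set) M P"
proof -
  have sP: "submod M P" using Mideal_submod[OF lmM I] .
  define Q where "Q = quot M P"
  have lmQ: "is_lmodule Q" unfolding Q_def using quot_lm[OF lmM sP] .
  have \<pi>H: "hom M Q (coset M P)" unfolding Q_def using quot_hom[OF lmM sP] .
  have Qz: "mzero Q = P" unfolding Q_def using quot_zero[OF lmM sP] .
  have Qc: "mcar Q = coset M P ` mcar M" unfolding Q_def using quot_car[OF lmM sP] .
  have "P = Ann M Q"
  proof
    show "Ann M Q \<subseteq> P"
    proof
      fix m assume "m \<in> Ann M Q"
      then have mM: "m \<in> mcar M" and allf: "\<forall>f. hom M Q f \<longrightarrow> f m = mzero Q" unfolding Ann_def by auto
      have "coset M P m = P" using allf[rule_format, OF \<pi>H] Qz by simp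
      then show "m \<in> P" using coset_zero[OF lmM sP mM] by simp
    qed
    show "P \<subseteq> Ann M Q"
    proof
      fix p assume p: "p \<in> P"
      have pM: "p \<in> mcar M" using p sP submodD by blast
      have "\<forall>f. hom M Q f \<longrightarrow> f p = mzero Q"
      proof (intro allI impI)
        fix f assume f: "hom M Q f"
        have gs: "f ` mcar M \<subseteq> coset M P ` mcar M" using homD(1)[OF f] Qc by blast
        obtain h where h: "hom M M h" "\<forall>m\<in>mcar M. coset M P (h m) = f m"
          using lift[OF lmM proj lmM in_sigma_self[OF lmM] lmQ \<pi>H gs f] by blast
        have "h p \<in> P" using Mideal_inv[OF I h(1) p] .
        then have "coset M P (h p) = P" using coset_zero[OF lmM sP] homD(1)[OF h(1) pM] by blast
        then show "f p = mzero Q" using h(2) pM Qz by simp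
      qed
      then show "p \<in> Ann M Q" using pM unfolding Ann_def by blast
    qed
  qed
  then show ?thesis unfolding prime_Mideal_def
    by (intro conjI I PM exI[of _ Q]) (use lmQ mq in \<open>simp_all add: Q_def\<close>)
qed

theorem proposition2p10:
  fixes M :: "('r::{ring,monoid_mult}, 'm) lmodule"
    and X :: "('r, 'x) lmodule"
  assumes "is_lmodule M" and "proj_sigma M"
    and "is_lmodule X" and "in_sigma M X"
  shows "(\<forall>P. Mprime_sub M X P \<longrightarrow> Mprime_module M (quot X P)) \<and>
         (\<forall>P. Mideal M P \<and> P \<noteq> mcar M \<longrightarrow>
            ((prime_Mideal TYPE('y) M P \<longrightarrow> Mprime_sub M M P) \<and>
             (Mprime_sub M M P \<longleftrightarrow> Mprime_module M (quot M P)) \<and>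
             (Mprime_module M (quot M P) \<longrightarrow> prime_Mideal TYPE('m set) M P)))"
proof -
  have A: "\<forall>P. Mprime_sub M X P \<longrightarrow> Mprime_module M (quot X P)" using part1 assms by blast
  have B: "(prime_Mideal TYPE('y) M P \<longrightarrow> Mprime_sub M M P) \<and>
             (Mprime_sub M M P \<longleftrightarrow> Mprime_module M (quot M P)) \<and>
             (Mprime_module M (quot M P) \<longrightarrow> prime_Mideal TYPE('m set) M P)"
    if P: "Mideal M P \<and> P \<noteq> mcar M" for P
  proof -
    have 1: "prime_Mideal TYPE('y) M P \<longrightarrow> Mprime_sub M M P" using p12[OF assms(1,2)] P by blast
    have 2: "Mprime_sub M M P \<longrightarrow> Mprime_module M (quot M P)"
      using part1[OF assms(1,2,1) in_sigma_self[OF assms(1)]] by blast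
    have 3: "Mprime_module M (quot M P) \<longrightarrow> Mprime_sub M M P"
      using p32[OF assms(1,2) Mideal_submod[OF assms(1)]] P by blast
    have 4: "Mprime_module M (quot M P) \<longrightarrow> prime_Mideal TYPE('m set) M P"
      using p31[OF assms(1,2)] P by blast
    show ?thesis using 1 2 3 4 by blast
  qed
  show ?thesis using A B by blast
qed


end
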